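(* Let $l\ge1$ be an integer and $(a_0,\dots,a_{l-1})\in\mathbb{R}^l$, and consider the planar system given in polar coordinates $(\rho,\varphi)$ by $$\dot\rho=-\rho\left(\rho^{-2l}+\sum_{j=0}^{l-1}a_j\rho^{-2j}\right),\qquad\dot\varphi=1.$$ Suppose this system has a limit cycle $\rho=\rho_0$ ($\rho_0>0$) of multiplicity $m$, $1\le m\le l$. Let $\Gamma_1$ and $\Gamma_2$ be parts of two trajectories of the system near the limit cycle, from outside and from inside respectively. Then $\Gamma_1$ and $\Gamma_2$ are comparable (a) with exponential spirals $\rho=\rho_0\pm e^{-\beta\varphi}$ of limit cycle type when $m=1$, for some constant $\beta\neq0$ depending only on $a_0,\dots,a_{l-1}$; (b) with power spirals $\rho=\rho_0\pm\varphi^{-1/(m-1)}$ when $m>1$. In both cases $\dim_B\Gamma_i=2-\frac1m$ for $i=1,2$.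
   Context: The multiplicity of the limit cycle $\rho=\rho_0$ is the multiplicity of $\rho_0$ as a zero of the function $\rho\mapsto\rho^{-2l}+\sum_{j=0}^{l-1}a_j\rho^{-2j}$. A spiral $\rho=F(\varphi)$ near the circle $\rho=\rho_0$ is comparable with $\rho=\rho_0\pm G(\varphi)$ if there are constants $c_1,c_2>0$ with $c_1G(\varphi)\le|F(\varphi)-\rho_0|\le c_2G(\varphi)$ for all $\varphi$ in the end of the range of angles along which the spiral accumulates on the circle. For a nonempty bounded $B\subset\mathbb{R}^2$, with $B_\varepsilon$ its $\varepsilon$-neighbourhood and $|B_\varepsilon|$ its area, $\overline{\dim}_BB=\inf\{s:\limsup_{\varepsilon\to0}|B_\varepsilon|/\varepsilon^{2-s}=0\}$, $\underline{\dim}_BB$ is the same with $\liminf$, and $\dim_BB$ is their common value. *)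

theory Defs
  imports "HOL-Analysis.Analysis"
begin

definition cyc_fun :: "nat \<Rightarrow> (nat \<Rightarrow> real) \<Rightarrow> real \<Rightarrow> real" where
  "cyc_fun l a \<rho> = inverse (\<rho> ^ (2*l)) + (\<Sum>j<l. a j * inverse (\<rho> ^ (2*j)))"

definition zero_multiplicity :: "(real \<Rightarrow> real) \<Rightarrow> real \<Rightarrow> nat \<Rightarrow> bool" where
  "zero_multiplicity g x m \<longleftrightarrow>
     (\<forall>k<m. (deriv ^^ k) g x = 0) \<and> (deriv ^^ m) g x \<noteq> 0"

text \<open>A part of a trajectory of the system written as a spiral rho = F(phi), phi in T,
  where T is a half-line on whose end (filter L) the spiral accumulates on the circle rho = rho0.\<close>
definition traj_tail ::
  "nat \<Rightarrow> (nat \<Rightarrow> real) \<Rightarrow> real \<Rightarrow> (real \<Rightarrow> real) \<Rightarrow> real set \<Rightarrow> real filter \<Rightarrow> bool" where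
  "traj_tail l a \<rho>0 F T L \<longleftrightarrow>
     (\<exists>\<phi>1. (T = {\<phi>1..} \<and> L = at_top) \<or> (T = {..\<phi>1} \<and> L = at_bot)) \<and>
     (\<forall>\<phi>\<in>T. F \<phi> > 0 \<and> F \<phi> \<noteq> \<rho>0 \<and>
        (F has_real_derivative (- F \<phi> * cyc_fun l a (F \<phi>))) (at \<phi> within T)) \<and>
     (F \<longlongrightarrow> \<rho>0) L"

definition spiral_set :: "(real \<Rightarrow> real) \<Rightarrow> real set \<Rightarrow> (real \<times> real) set" where
  "spiral_set F T = (\<lambda>\<phi>. (F \<phi> * cos \<phi>, F \<phi> * sin \<phi>)) ` T"

definition comparable :: "(real \<Rightarrow> real) \<Rightarrow> real \<Rightarrow> (real \<Rightarrow> real) \<Rightarrow> real filter \<Rightarrow> bool" where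
  "comparable F \<rho>0 G L \<longleftrightarrow>
     (\<exists>c1>0. \<exists>c2>0. \<forall>\<^sub>F \<phi> in L. c1 * G \<phi> \<le> \<bar>F \<phi> - \<rho>0\<bar> \<and> \<bar>F \<phi> - \<rho>0\<bar> \<le> c2 * G \<phi>)"

definition eps_nbhd :: "(real \<times> real) set \<Rightarrow> real \<Rightarrow> (real \<times> real) set" where
  "eps_nbhd B \<epsilon> = (\<Union>b\<in>B. ball b \<epsilon>)"

definition upper_box_dim :: "(real \<times> real) set \<Rightarrow> real" where
  "upper_box_dim B = Inf {s. Limsup (at_right 0)
      (\<lambda>\<epsilon>. ereal (measure lborel (eps_nbhd B \<epsilon>) / \<epsilon> powr (2 - s))) = 0}"

definition lower_box_dim :: "(real \<times> real) set \<Rightarrow> real" where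
  "lower_box_dim B = Inf {s. Liminf (at_right 0)
      (\<lambda>\<epsilon>. ereal (measure lborel (eps_nbhd B \<epsilon>) / \<epsilon> powr (2 - s))) = 0}"

definition has_box_dim :: "(real \<times> real) set \<Rightarrow> real \<Rightarrow> bool" where
  "has_box_dim B d \<longleftrightarrow> lower_box_dim B = d \<and> upper_box_dim B = d"

end

theory Submission
  imports Defs
begin


definition LP :: "(real \<times> real) list \<Rightarrow> real \<Rightarrow> real" where
  "LP xs x = (\<Sum>p\<leftarrow>xs. fst p * x powr snd p)"
definition LD :: "(real \<times> real) list \<Rightarrow> (real \<times> real) list" where
  "LD xs = map (\<lambda>p. (fst p * snd p, snd p - 1)) xs"

lemma LP_deriv: "x > 0 \<Longrightarrow> (LP xs has_real_derivative LP (LD xs) x) (at x)"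
proof (induction xs)
  case Nil
  then show ?case by (simp add: LP_def LD_def)
next
  case (Cons p xs)
  have e: "LP (p # xs) = (\<lambda>x. fst p * x powr snd p + LP xs x)" by (auto simp: LP_def)
  have e2: "LP (LD (p#xs)) x = fst p * (snd p * x powr (snd p - 1)) + LP (LD xs) x"
    by (simp add: LP_def LD_def)
  show ?case unfolding e e2
    by (intro DERIV_add DERIV_cmult has_real_derivative_powr Cons.IH Cons.prems)
qed

lemma cyc_fun_LP:
  assumes "x > 0"
  shows "cyc_fun l a x = LP ((1, - (2 * real l)) # map (\<lambda>j. (a j, - (2 * real j))) [0..<l]) x"
proof -
  have p: "inverse (x ^ k) = x powr (- real k)" for k
    using assms by (simp add: powr_minus powr_realpow)
  show ?thesis
    unfolding cyc_fun_def LP_def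
    by (simp add: p[of "2*l", simplified] p[of "2*_", simplified] 
         atLeast0LessThan o_def interv_sum_list_conv_sum_set_nat)
qed

lemma cyc_fun_higher:
  fixes l a
  defines "xs0 \<equiv> (1, - (2 * real l)) # map (\<lambda>j. (a j, - (2 * real j))) [0..<l]"
  shows "x > 0 \<Longrightarrow> (deriv ^^ k) (cyc_fun l a) x = LP ((LD ^^ k) xs0) x"
proof (induction k arbitrary: x)
  case 0
  then show ?case using cyc_fun_LP[of x l a] by (simp add: xs0_def)
next
  case (Suc k)
  have ev: "eventually (\<lambda>y. (deriv ^^ k) (cyc_fun l a) y = LP ((LD ^^ k) xs0) y) (nhds x)"
    using eventually_nhds_in_open[of "{0<..}" x] Suc by (auto elim!: eventually_mono)
  have "(deriv ^^ Suc k) (cyc_fun l a) x = deriv ((deriv ^^ k) (cyc_fun l a)) x" by simp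
  also have "\<dots> = deriv (LP ((LD ^^ k) xs0)) x" by (rule deriv_cong_ev[OF ev refl])
  also have "\<dots> = LP (LD ((LD ^^ k) xs0)) x" by (rule DERIV_imp_deriv, rule LP_deriv, fact)
  finally show ?case by simp
qed

lemma cyc_fun_higher_deriv:
  assumes "x > 0"
  shows "((deriv ^^ k) (cyc_fun l a) has_real_derivative (deriv ^^ Suc k) (cyc_fun l a) x) (at x)"
proof -
  define xs0 where "xs0 \<equiv> (1, - (2 * real l)) # map (\<lambda>j. (a j, - (2 * real j))) [0..<l]"
  have ev: "eventually (\<lambda>y. LP ((LD ^^ k) xs0) y = (deriv ^^ k) (cyc_fun l a) y) (nhds x)"
    using eventually_nhds_in_open[of "{0<..}" x] assms cyc_fun_higher[where l=l and a=a and k=k]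
    by (auto elim!: eventually_mono simp: xs0_def)
  have "(LP ((LD ^^ k) xs0) has_real_derivative LP ((LD ^^ Suc k) xs0) x) (at x)"
    using LP_deriv[OF assms] by simp
  then have "((deriv ^^ k) (cyc_fun l a) has_real_derivative LP ((LD ^^ Suc k) xs0) x) (at x)"
    by (rule has_field_derivative_transform_within_open[where S="{0<..}"])
       (use assms cyc_fun_higher[where l=l and a=a and k=k] in \<open>auto simp: xs0_def\<close>)
  then show ?thesis using cyc_fun_higher[OF assms, where l=l and a=a and k="Suc k"] by (simp add: xs0_def)
qed

lemma cyc_fun_higher_cont:
  assumes "x > 0"
  shows "isCont ((deriv ^^ k) (cyc_fun l a)) x"
  using cyc_fun_higher_deriv[OF assms] DERIV_isCont by blast



lemma taylor_zero:
  fixes f :: "real \<Rightarrow> real"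
  assumes d: "\<And>k t. t > 0 \<Longrightarrow> ((deriv ^^ k) f has_real_derivative (deriv ^^ Suc k) f t) (at t)"
    and r0: "\<rho>0 > 0" and z: "\<forall>k<n. (deriv ^^ k) f \<rho>0 = 0" and n: "n > 0"
    and x: "x > 0" "x \<noteq> \<rho>0"
  shows "\<exists>t. t > 0 \<and> \<bar>t - \<rho>0\<bar> \<le> \<bar>x - \<rho>0\<bar> \<and> f x = (deriv ^^ n) f t / fact n * (x - \<rho>0) ^ n"
proof -
  have "\<exists>t. (if x < \<rho>0 then x < t \<and> t < \<rho>0 else \<rho>0 < t \<and> t < x) \<and>
    f x = (\<Sum>m<n. ((deriv ^^ m) f \<rho>0 / fact m) * (x - \<rho>0)^m) + ((deriv ^^ n) f t / fact n) * (x - \<rho>0)^n"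
  proof (rule Taylor[where a="min x \<rho>0" and b="max x \<rho>0"])
    show "\<forall>m t. m < n \<and> min x \<rho>0 \<le> t \<and> t \<le> max x \<rho>0 \<longrightarrow>
      ((deriv ^^ m) f has_real_derivative (deriv ^^ Suc m) f t) (at t)"
    proof (intro allI impI)
      fix m t assume "m < n \<and> min x \<rho>0 \<le> t \<and> t \<le> max x \<rho>0"
      then have "t > 0" using x r0 by linarith
      then show "((deriv ^^ m) f has_real_derivative (deriv ^^ Suc m) f t) (at t)" by (rule d)
    qed
  qed (use n x in auto)
  then obtain t where t: "(if x < \<rho>0 then x < t \<and> t < \<rho>0 else \<rho>0 < t \<and> t < x)"
    "f x = (\<Sum>m<n. ((deriv ^^ m) f \<rho>0 / fact m) * (x - \<rho>0)^m) + ((deriv ^^ n) f t / fact n) * (x - \<rho>0)^n"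
    by blast
  have "(\<Sum>m<n. ((deriv ^^ m) f \<rho>0 / fact m) * (x - \<rho>0)^m) = 0" using z by simp
  with t show ?thesis using x r0 by (intro exI[of _ t]) (auto split: if_splits)
qed

lemma mult_factor:
  fixes f :: "real \<Rightarrow> real"
  assumes d: "\<And>k t. t > 0 \<Longrightarrow> ((deriv ^^ k) f has_real_derivative (deriv ^^ Suc k) f t) (at t)"
    and r0: "\<rho>0 > 0" and z: "\<forall>k<m. (deriv ^^ k) f \<rho>0 = 0" and m: "m > 0"
    and D: "(deriv ^^ m) f \<rho>0 = D" "D \<noteq> 0"
  shows "\<exists>\<delta>>0. \<delta> < \<rho>0 \<and> (\<forall>x. \<bar>x - \<rho>0\<bar> \<le> \<delta> \<longrightarrow>
      (\<exists>\<kappa>. f x = \<kappa> * (x - \<rho>0) ^ m \<and> \<bar>\<kappa> - D / fact m\<bar> \<le> \<bar>D\<bar> / (2 * fact m)))"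
proof -
  have "isCont ((deriv ^^ m) f) \<rho>0" using d[OF r0] DERIV_isCont by blast
  then obtain e where e: "e > 0" "\<And>t. dist t \<rho>0 < e \<Longrightarrow> dist ((deriv ^^ m) f t) ((deriv ^^ m) f \<rho>0) < \<bar>D\<bar>/2"
    using D unfolding continuous_at_eps_delta by (metis zero_less_abs_iff half_gt_zero_iff)
  define \<delta> where "\<delta> = min (e/2) (\<rho>0/2)"
  have \<delta>: "\<delta> > 0" "\<delta> < \<rho>0" using e r0 by (auto simp: \<delta>_def)
  show ?thesis
  proof (rule exI[of _ \<delta>], intro conjI allI impI)
    show "\<delta> > 0" "\<delta> < \<rho>0" by (rule \<delta>)+
    fix x assume x: "\<bar>x - \<rho>0\<bar> \<le> \<delta>"
    show "\<exists>\<kappa>. f x = \<kappa> * (x - \<rho>0) ^ m \<and> \<bar>\<kappa> - D / fact m\<bar> \<le> \<bar>D\<bar> / (2 * fact m)"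
    proof (cases "x = \<rho>0")
      case True
      then show ?thesis using z m by (intro exI[of _ "D / fact m"]) (auto simp: zero_power)
    next
      case False
      have xp: "x > 0" using x \<delta> by auto
      obtain t where t: "t > 0" "\<bar>t - \<rho>0\<bar> \<le> \<bar>x - \<rho>0\<bar>" "f x = (deriv ^^ m) f t / fact m * (x - \<rho>0) ^ m"
        using taylor_zero[OF d r0 z m xp False] by blast
      have "\<bar>(deriv ^^ m) f t - D\<bar> < \<bar>D\<bar>/2"
        using e(2)[of t] t x \<delta> D by (auto simp: dist_real_def \<delta>_def)
      then have h: "\<bar>(deriv ^^ m) f t - D\<bar> \<le> \<bar>D\<bar>/2" by linarith
      have "\<bar>(deriv ^^ m) f t / fact m - D / fact m\<bar> = \<bar>(deriv ^^ m) f t - D\<bar> / fact m"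
        by (simp add: diff_divide_distrib[symmetric] abs_divide)
      also have "\<dots> \<le> (\<bar>D\<bar>/2) / fact m" by (rule divide_right_mono[OF h]) simp
      finally have "\<bar>(deriv ^^ m) f t / fact m - D / fact m\<bar> \<le> \<bar>D\<bar> / (2 * fact m)" by simp
      then show ?thesis using t by blast
    qed
  qed
qed

lemma second_order:
  fixes f :: "real \<Rightarrow> real"
  assumes d: "\<And>k t. t > 0 \<Longrightarrow> ((deriv ^^ k) f has_real_derivative (deriv ^^ Suc k) f t) (at t)"
    and r0: "\<rho>0 > 0" and z: "f \<rho>0 = 0"
  shows "\<exists>\<delta>>0. \<exists>M. \<delta> < \<rho>0 \<and> (\<forall>x. \<bar>x - \<rho>0\<bar> \<le> \<delta> \<longrightarrow>
      \<bar>f x - deriv f \<rho>0 * (x - \<rho>0)\<bar> \<le> M * (x - \<rho>0)^2)"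
proof -
  define \<delta> where "\<delta> = \<rho>0/2"
  have cont: "continuous_on {\<rho>0-\<delta>..\<rho>0+\<delta>} ((deriv ^^ 2) f)"
  proof (intro continuous_at_imp_continuous_on ballI)
    fix t assume "t \<in> {\<rho>0-\<delta>..\<rho>0+\<delta>}"
    then have "t > 0" using r0 unfolding \<delta>_def by auto
    then show "isCont ((deriv ^^ 2) f) t" using d DERIV_isCont by blast
  qed
  have "bounded ((deriv ^^ 2) f ` {\<rho>0-\<delta>..\<rho>0+\<delta>})"
    by (rule compact_imp_bounded, rule compact_continuous_image[OF cont]) auto
  then obtain B where B: "\<And>t. t \<in> {\<rho>0-\<delta>..\<rho>0+\<delta>} \<Longrightarrow> \<bar>(deriv ^^ 2) f t\<bar> \<le> B"
    unfolding bounded_iff by (metis atLeastAtMost_iff image_eqI real_norm_def)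
  have dd: "\<delta> > 0" "\<delta> < \<rho>0" using r0 by (auto simp: \<delta>_def)
  have main: "\<forall>x. \<bar>x - \<rho>0\<bar> \<le> \<delta> \<longrightarrow> \<bar>f x - deriv f \<rho>0 * (x - \<rho>0)\<bar> \<le> B / 2 * (x - \<rho>0)^2"
  proof (intro allI impI)
    fix x assume x: "\<bar>x - \<rho>0\<bar> \<le> \<delta>"
    show "\<bar>f x - deriv f \<rho>0 * (x - \<rho>0)\<bar> \<le> B / 2 * (x - \<rho>0)^2"
    proof (cases "x = \<rho>0")
      case True then show ?thesis using z by simp
    next
      case False
      have "\<exists>t. (if x < \<rho>0 then x < t \<and> t < \<rho>0 else \<rho>0 < t \<and> t < x) \<and>
        f x = (\<Sum>m<2. ((deriv ^^ m) f \<rho>0 / fact m) * (x - \<rho>0)^m) + ((deriv ^^ 2) f t / fact 2) * (x - \<rho>0)^2"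
      proof (rule Taylor[where a="min x \<rho>0" and b="max x \<rho>0"])
        show "\<forall>(m::nat) t. m < 2 \<and> min x \<rho>0 \<le> t \<and> t \<le> max x \<rho>0 \<longrightarrow>
          ((deriv ^^ m) f has_real_derivative (deriv ^^ Suc m) f t) (at t)"
        proof (intro allI impI)
          fix m :: nat and t assume "m < 2 \<and> min x \<rho>0 \<le> t \<and> t \<le> max x \<rho>0"
          then have "t > 0" using x r0 unfolding \<delta>_def by linarith
          then show "((deriv ^^ m) f has_real_derivative (deriv ^^ Suc m) f t) (at t)" by (rule d)
        qed
      qed (use False in auto)
      then obtain t where t: "(if x < \<rho>0 then x < t \<and> t < \<rho>0 else \<rho>0 < t \<and> t < x)"
        "f x = (\<Sum>m<2. ((deriv ^^ m) f \<rho>0 / fact m) * (x - \<rho>0)^m) + ((deriv ^^ 2) f t / fact 2) * (x - \<rho>0)^2"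
        by blast
      have tin: "t \<in> {\<rho>0-\<delta>..\<rho>0+\<delta>}" using t(1) x by (auto split: if_splits)
      have "f x - deriv f \<rho>0 * (x - \<rho>0) = (deriv ^^ 2) f t / 2 * (x - \<rho>0)^2"
        using t(2) z by (simp add: numeral_2_eq_2)
      also have "\<bar>\<dots>\<bar> \<le> B / 2 * (x - \<rho>0)^2"
        using B[OF tin] by (simp add: abs_mult mult_right_mono)
      finally show ?thesis .
    qed
  qed
  show ?thesis using dd main by blast
qed



lemma deriv_at_of_within:
  assumes "(g has_real_derivative d) (at z within {a..})" "a < z"
  shows "(g has_real_derivative d) (at z)"
proof -
  have "z \<in> interior {a..}" using interior_Ici[of "a-1" a] assms(2) by auto
  then have "at z within {a..} = at z" by (rule at_within_interior)
  then show ?thesis using assms(1) by simp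
qed

lemma mvt_within:
  fixes g g' :: "real \<Rightarrow> real"
  assumes D: "\<And>t. t \<ge> a \<Longrightarrow> (g has_real_derivative g' t) (at t within {a..})"
    and "a \<le> x" "x < y"
  shows "\<exists>z. x < z \<and> z < y \<and> g y - g x = (y - x) * g' z"
proof -
  have c: "continuous_on {a..} g" by (rule DERIV_continuous_on[of _ _ g']) (use D in auto)
  have c2: "continuous_on {x..y} g" by (rule continuous_on_subset[OF c]) (use assms in auto)
  have "\<exists>l z. x < z \<and> z < y \<and> DERIV g z :> l \<and> g y - g x = (y - x) * l"
  proof (rule MVT[OF assms(3) c2])
    fix z assume "x < z" "z < y"
    then have "(g has_real_derivative g' z) (at z)"
      using deriv_at_of_within[OF D] assms by auto
    then show "g differentiable (at z)" using real_differentiable_def by blast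
  qed
  then obtain l z where lz: "x < z" "z < y" "DERIV g z :> l" "g y - g x = (y - x) * l" by blast
  have "DERIV g z :> g' z" using deriv_at_of_within[OF D] lz assms by auto
  then have "l = g' z" using DERIV_unique lz(3) by blast
  then show ?thesis using lz by blast
qed

lemma decr_within:
  fixes g g' :: "real \<Rightarrow> real"
  assumes D: "\<And>t. t \<ge> a \<Longrightarrow> (g has_real_derivative g' t) (at t within {a..})"
    and N: "\<And>t. t \<ge> a \<Longrightarrow> g' t \<le> 0"
    and "a \<le> x" "x \<le> y"
  shows "g y \<le> g x"
proof (cases "x = y")
  case False
  then have "x < y" using assms by auto
  then obtain z where "x < z" "z < y" "g y - g x = (y - x) * g' z"
    using mvt_within[OF D assms(3)] by blast
  moreover have "g' z \<le> 0" using N \<open>x < z\<close> assms by auto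
  ultimately have "(y - x) * g' z \<le> 0" "g y - g x = (y - x) * g' z"
    using \<open>x < y\<close> by (auto intro: mult_nonneg_nonpos)
  then show ?thesis by linarith
qed simp

lemma incr_within:
  fixes g g' :: "real \<Rightarrow> real"
  assumes D: "\<And>t. t \<ge> a \<Longrightarrow> (g has_real_derivative g' t) (at t within {a..})"
    and N: "\<And>t. t \<ge> a \<Longrightarrow> g' t \<ge> 0"
    and "a \<le> x" "x \<le> y"
  shows "g x \<le> g y"
proof -
  have "(- g) y \<le> (- g) x"
    by (rule decr_within[where g'="\<lambda>t. - g' t"]) (use D N assms in \<open>auto intro: derivative_intros\<close>)
  then show ?thesis by simp
qed

lemma deriv_within_subset_atLeast:
  "(g has_real_derivative d) (at t within {a..}) \<Longrightarrow> a \<le> b \<Longrightarrow> (g has_real_derivative d) (at t within {b..})"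
  by (erule DERIV_subset) auto



locale spir =
  fixes f :: "real \<Rightarrow> real" and \<rho>0 t1 \<sigma> :: real and G :: "real \<Rightarrow> real" and m :: nat
    and \<delta> kl ku sD :: real
  assumes r0: "\<rho>0 > 0" and sig: "\<sigma> = 1 \<or> \<sigma> = -1" and m: "m \<ge> 1"
  and Gpos: "\<And>t. t \<ge> t1 \<Longrightarrow> G t > 0" and Gne: "\<And>t. t \<ge> t1 \<Longrightarrow> G t \<noteq> \<rho>0"
  and Gder: "\<And>t. t \<ge> t1 \<Longrightarrow> (G has_real_derivative (\<sigma> * (- G t * f (G t)))) (at t within {t1..})"
  and Glim: "(G \<longlongrightarrow> \<rho>0) at_top"
  and dl: "\<delta> > 0" and kl: "kl > 0" and sD: "sD = 1 \<or> sD = -1"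
  and fac: "\<And>x. \<bar>x - \<rho>0\<bar> \<le> \<delta> \<Longrightarrow> \<exists>\<kappa>. f x = \<kappa> * (x - \<rho>0)^m \<and> kl \<le> sD * \<kappa> \<and> sD * \<kappa> \<le> ku"
begin

definition s0 :: real where "s0 = (if G t1 > \<rho>0 then 1 else -1)"
definition U :: "real \<Rightarrow> real" where "U t = s0 * (G t - \<rho>0)"
definition Ud :: "real \<Rightarrow> real" where "Ud t = s0 * (\<sigma> * (- G t * f (G t)))"

lemma s0: "s0 = 1 \<or> s0 = -1" by (auto simp: s0_def)
lemma s0sq: "s0 * s0 = 1" using s0 by auto
lemma sigsq: "\<sigma> * \<sigma> = 1" using sig by auto
lemma sDsq: "sD * sD = 1" using sD by auto

lemma Gcont: "continuous_on {t1..} G"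
  by (rule DERIV_continuous_on[of _ _ "\<lambda>t. \<sigma> * (- G t * f (G t))"]) (use Gder in auto)

lemma Ucont: "continuous_on {t1..} U"
  unfolding U_def by (intro continuous_intros Gcont)

lemma U_der: "t \<ge> t1 \<Longrightarrow> (U has_real_derivative Ud t) (at t within {t1..})"
  unfolding U_def Ud_def
  by (rule derivative_eq_intros Gder refl | simp)+

lemma U_pos: assumes "t \<ge> t1" shows "U t > 0"
proof (rule ccontr)
  assume "\<not> U t > 0"
  then have a: "U t \<le> 0" by simp
  have b: "0 \<le> U t1" using Gne[of t1] by (auto simp: U_def s0_def)
  obtain x where x: "t1 \<le> x" "x \<le> t" "U x = 0"
    using IVT2'[of U t 0 t1, OF a b assms continuous_on_subset[OF Ucont]] by auto
  then show False using Gne[of x] s0 by (auto simp: U_def)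
qed

lemma U_abs: "t \<ge> t1 \<Longrightarrow> U t = \<bar>G t - \<rho>0\<bar>"
  using U_pos[of t] s0 by (auto simp: U_def)

lemma G_eq: "G t = \<rho>0 + s0 * U t"
  using s0 by (auto simp: U_def)

lemma U_lim: "(U \<longlongrightarrow> 0) at_top"
proof -
  have "((\<lambda>t. s0 * (G t - \<rho>0)) \<longlongrightarrow> s0 * (\<rho>0 - \<rho>0)) at_top"
    by (intro tendsto_intros Glim)
  then show ?thesis by (simp add: U_def[abs_def])
qed

lemma key:
  "\<exists>t0 c1 c2. t0 \<ge> t1 \<and> 0 < c1 \<and> 0 < c2 \<and> (\<forall>t\<ge>t0. U t \<le> \<delta> \<and> U t \<le> \<rho>0/2 \<and> U t \<le> 1 \<and>
      - c2 * U t ^ m \<le> Ud t \<and> Ud t \<le> - c1 * U t ^ m)"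
proof -
  have "eventually (\<lambda>t. U t < min \<delta> (min (\<rho>0/2) 1)) at_top"
    using U_lim dl r0 by (intro order_tendstoD) auto
  then obtain ta0 where ta0: "\<And>t. t \<ge> ta0 \<Longrightarrow> U t < min \<delta> (min (\<rho>0/2) 1)"
    unfolding eventually_at_top_linorder by blast
  define ta where "ta = max ta0 t1"
  have ta: "ta \<ge> t1" "\<And>t. t \<ge> ta \<Longrightarrow> U t < min \<delta> (min (\<rho>0/2) 1)"
    using ta0 by (auto simp: ta_def)
  define \<tau> where "\<tau> = s0 ^ Suc m * \<sigma> * sD"
  have \<tau>: "\<tau> = 1 \<or> \<tau> = -1" using s0 sig sD by (auto simp: \<tau>_def minus_one_power_iff split: if_splits)
  have rep: "\<exists>P. Ud t = - \<tau> * P \<and> \<rho>0/2 * kl * U t ^ m \<le> P \<and> P \<le> 3*\<rho>0/2 * ku * U t ^ m"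
    if t: "t \<ge> ta" for t
  proof -
    have Ut: "U t > 0" "U t < \<delta>" "U t < \<rho>0/2" "U t < 1" using ta(2)[OF t] U_pos[of t] ta(1) t by auto
    have "\<bar>G t - \<rho>0\<bar> \<le> \<delta>" using Ut U_abs[of t] ta(1) t by auto
    then obtain \<kappa> where k: "f (G t) = \<kappa> * (G t - \<rho>0)^m" "kl \<le> sD * \<kappa>" "sD * \<kappa> \<le> ku"
      using fac by blast
    have Gb: "\<rho>0/2 \<le> G t" "G t \<le> 3*\<rho>0/2" using G_eq[of t] Ut s0 by auto
    define P where "P = G t * (sD * \<kappa>) * U t ^ m"
    have e1: "(G t - \<rho>0) = s0 * U t" using G_eq[of t] by simp
    have "Ud t = s0 * (\<sigma> * (- G t * (\<kappa> * (s0 * U t)^m)))" by (simp add: Ud_def k e1)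
    also have "\<dots> = - (s0 ^ Suc m * \<sigma>) * (G t * \<kappa> * U t ^ m)"
      by (simp add: power_mult_distrib algebra_simps)
    also have "\<dots> = - \<tau> * P" unfolding \<tau>_def P_def using sDsq
      by (simp add: algebra_simps)
    finally have 1: "Ud t = - \<tau> * P" .
    have Um: "U t ^ m \<ge> 0" using Ut by simp
    have 2: "\<rho>0/2 * kl * U t ^ m \<le> P" unfolding P_def
      by (intro mult_right_mono mult_mono Gb k Um) (use r0 kl Gb in auto)
    have 3: "P \<le> 3*\<rho>0/2 * ku * U t ^ m" unfolding P_def
      by (intro mult_right_mono mult_mono Gb k Um) (use r0 kl k Gb in auto)
    show ?thesis using 1 2 3 by blast
  qed
  have "\<tau> = 1"
  proof (rule ccontr)
    assume "\<tau> \<noteq> 1"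
    then have tm: "\<tau> = -1" using \<tau> by auto
    have nn: "Ud t \<ge> 0" if tt: "t \<ge> ta" for t
    proof -
      obtain P where "Ud t = - \<tau> * P" "\<rho>0/2 * kl * U t ^ m \<le> P"
        using rep[OF tt] by blast
      moreover have "\<rho>0/2 * kl * U t ^ m \<ge> 0" using U_pos[of t] ta tt r0 kl by auto
      ultimately show ?thesis using tm by simp
    qed
    have inc: "U ta \<le> U t" if "t \<ge> ta" for t
      by (rule incr_within[of ta U Ud])
         (use nn that ta(1) in \<open>auto intro!: deriv_within_subset_atLeast[OF U_der]\<close>)
    have "eventually (\<lambda>t. U t < U ta) at_top"
      using U_lim U_pos[OF ta(1)] by (intro order_tendstoD) auto
    then obtain tb where "\<And>t. t \<ge> tb \<Longrightarrow> U t < U ta" unfolding eventually_at_top_linorder by blast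
    then have "U (max ta tb) < U ta" by simp
    moreover have "U ta \<le> U (max ta tb)" by (rule inc) simp
    ultimately show False by simp
  qed
  show ?thesis
  proof (rule exI[of _ ta], rule exI[of _ "\<rho>0/2 * kl"], rule exI[of _ "3*\<rho>0/2 * ku"], intro conjI allI impI)
    show "ta \<ge> t1" by (rule ta)
    show "0 < \<rho>0/2 * kl" using r0 kl by simp
    obtain P where P: "\<rho>0/2 * kl * U ta ^ m \<le> P" "P \<le> 3*\<rho>0/2 * ku * U ta ^ m"
      using rep[of ta] by auto
    have "0 < \<rho>0/2 * kl * U ta ^ m" using r0 kl U_pos[OF ta(1)] by simp
    then have "0 < 3*\<rho>0/2 * ku * U ta ^ m" using P by linarith
    then show "0 < 3*\<rho>0/2 * ku" using U_pos[OF ta(1)] by (simp add: zero_less_mult_iff)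
    fix t assume t: "ta \<le> t"
    show "U t \<le> \<delta>" "U t \<le> \<rho>0/2" "U t \<le> 1" using ta(2)[OF t] by auto
    obtain P where P: "Ud t = - \<tau> * P" "\<rho>0/2 * kl * U t ^ m \<le> P" "P \<le> 3*\<rho>0/2 * ku * U t ^ m"
      using rep[OF t] by blast
    show "- (3*\<rho>0/2 * ku) * U t ^ m \<le> Ud t" "Ud t \<le> - (\<rho>0/2 * kl) * U t ^ m"
      using P \<open>\<tau> = 1\<close> by auto
  qed
qed

end


locale spir2 = spir +
  fixes t0 c1 c2 :: real
  assumes t0: "t0 \<ge> t1" and c1: "c1 > 0" and c2: "c2 > 0"
  and kp: "\<And>t. t \<ge> t0 \<Longrightarrow> U t \<le> \<delta> \<and> U t \<le> \<rho>0/2 \<and> U t \<le> 1 \<and> - c2 * U t ^ m \<le> Ud t \<and> Ud t \<le> - c1 * U t ^ m"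
begin

lemma U_der0: "t \<ge> t0 \<Longrightarrow> (U has_real_derivative Ud t) (at t within {t0..})"
  by (rule deriv_within_subset_atLeast[OF U_der]) (use t0 in auto)

lemma Upos0: "t \<ge> t0 \<Longrightarrow> U t > 0" using U_pos t0 by auto

lemma U_decr: "t0 \<le> x \<Longrightarrow> x \<le> y \<Longrightarrow> U y \<le> U x"
proof (rule decr_within[of t0 U Ud])
  fix t assume "t \<ge> t0"
  then have "c1 * U t ^ m > 0" using Upos0[of t] c1 by simp
  then show "Ud t \<le> 0" using kp[of t] \<open>t \<ge> t0\<close> by linarith
qed (use U_der0 in auto)

lemma gap: assumes t: "t \<ge> t0" shows "U t - U (t + 2*pi) \<le> 2*pi*c2 * U t ^ m"
proof -
  have tt: "t < t + 2*pi" using pi_gt_zero by simp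
  obtain z where z: "t < z" "z < t + 2*pi" "U (t+2*pi) - U t = (t + 2*pi - t) * Ud z"
    using mvt_within[of t0 U Ud t "t+2*pi", OF U_der0 t tt] by blast
  have z0: "z \<ge> t0" using z t by simp
  have "U z \<le> U t" by (rule U_decr) (use z t in simp_all)
  moreover have "0 \<le> U z" using Upos0[OF z0] by simp
  ultimately have "U z ^ m \<le> U t ^ m" by (rule power_mono)
  then have "c2 * U z ^ m \<le> c2 * U t ^ m" using c2 by (intro mult_left_mono) auto
  then have "- c2 * U t ^ m \<le> Ud z" using kp[OF z0] by linarith
  then have "2*pi * (- c2 * U t ^ m) \<le> 2*pi * Ud z" using pi_gt_zero by (intro mult_left_mono) auto
  moreover have "U (t+2*pi) - U t = 2*pi * Ud z" using z(3) by simp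
  ultimately show ?thesis by linarith
qed

lemma Um_le_U: "t \<ge> t0 \<Longrightarrow> U t ^ m \<le> U t"
proof -
  assume t: "t \<ge> t0"
  have "U t ^ m \<le> U t ^ 1" by (rule power_decreasing) (use kp[OF t] Upos0[OF t] m in auto)
  then show "U t ^ m \<le> U t" by simp
qed

lemma lnU_der: "t \<ge> t0 \<Longrightarrow> ((\<lambda>s. ln (U s)) has_real_derivative (1 / U t * Ud t)) (at t within {t0..})"
  by (rule DERIV_chain2[OF DERIV_ln_divide U_der0]) (auto intro: Upos0)

lemma ratio: assumes t: "t \<ge> t0" shows "U (t + 2*pi) \<ge> exp (- 2*pi*c2) * U t"
proof -
  have D: "((\<lambda>s. ln (U s) + c2 * s) has_real_derivative 1 / U s * Ud s + c2) (at s within {t0..})"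
    if s: "s \<ge> t0" for s
  proof -
    have "((\<lambda>s. ln (U s) + c2 * s) has_real_derivative 1 / U s * Ud s + c2 * 1) (at s within {t0..})"
      by (intro DERIV_add lnU_der[OF s] DERIV_cmult DERIV_ident)
    then show ?thesis by simp
  qed
  have N: "0 \<le> 1 / U s * Ud s + c2" if s: "s \<ge> t0" for s
  proof -
    have "c2 * U s ^ m \<le> c2 * U s" using Um_le_U[OF s] c2 by (intro mult_left_mono) auto
    then have "- c2 * U s \<le> Ud s" using kp[OF s] by linarith
    then have "- c2 \<le> Ud s / U s" using Upos0[OF s] by (simp add: field_simps)
    then show ?thesis by simp
  qed
  have "ln (U t) + c2 * t \<le> ln (U (t+2*pi)) + c2 * (t+2*pi)"
    using incr_within[of t0 "\<lambda>s. ln (U s) + c2 * s" "\<lambda>s. 1 / U s * Ud s + c2", OF D N, of t "t+2*pi"]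
      t pi_gt_zero by simp
  then have "ln (U t) - 2*pi*c2 \<le> ln (U (t+2*pi))" by (simp add: distrib_left mult.commute)
  then have "exp (ln (U t) - 2*pi*c2) \<le> exp (ln (U (t+2*pi)))" by simp
  moreover have "U (t+2*pi) > 0" using Upos0[of "t+2*pi"] t pi_gt_zero by simp
  ultimately have "exp (ln (U t) - 2*pi*c2) \<le> U (t+2*pi)" by simp
  then show ?thesis using Upos0[OF t] by (simp add: exp_diff exp_minus divide_inverse mult.commute)
qed

end


context spir2 begin

lemma W_der:
  assumes s: "s \<ge> t0"
  shows "((\<lambda>s. U s powr r) has_real_derivative (r * U s powr (r - 1) * Ud s)) (at s within {t0..})"
  using DERIV_chain2[OF has_real_derivative_powr[OF Upos0[OF s]] U_der0[OF s]] by simp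

lemma W_bounds:
  assumes m1: "m > 1" and t: "t \<ge> t0"
  shows "U t0 powr (1 - real m) + (real m - 1) * c1 * (t - t0) \<le> U t powr (1 - real m)
       \<and> U t powr (1 - real m) \<le> U t0 powr (1 - real m) + (real m - 1) * c2 * (t - t0)"
proof -
  define r where "r = 1 - real m"
  define W' where "W' s = r * U s powr (r - 1) * Ud s" for s
  have Wd: "((\<lambda>s. U s powr r) has_real_derivative W' s) (at s within {t0..})" if "s \<ge> t0" for s
    unfolding W'_def by (rule W_der[OF that])
  have Wb: "(real m - 1) * c1 \<le> W' s \<and> W' s \<le> (real m - 1) * c2" if s: "s \<ge> t0" for s
  proof -
    have Up: "U s > 0" by (rule Upos0[OF s])
    have pe: "U s powr (r - 1) = inverse (U s ^ m)"
      using Up by (simp add: r_def powr_minus[symmetric] powr_realpow[symmetric])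
    have um: "U s ^ m > 0" using Up by simp
    have "W' s = r * inverse (U s ^ m) * Ud s" unfolding W'_def pe by simp
    also have "\<dots> = (real m - 1) * (- Ud s / U s ^ m)" unfolding r_def using um
      by (simp add: divide_simps) (simp add: algebra_simps)
    finally have "W' s = (real m - 1) * (- Ud s / U s ^ m)" .
    moreover have "c1 \<le> - Ud s / U s ^ m" "- Ud s / U s ^ m \<le> c2"
      using kp[OF s] um by (simp_all add: field_simps)
    moreover have "real m - 1 \<ge> 0" using m1 by simp
    ultimately show ?thesis by (metis mult_left_mono)
  qed
  have 1: "U t0 powr r - (real m - 1) * c1 * t0 \<le> U t powr r - (real m - 1) * c1 * t"
  proof (rule incr_within[of t0 "\<lambda>s. U s powr r - (real m - 1) * c1 * s" "\<lambda>s. W' s - (real m - 1) * c1 * 1"])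
    fix s assume s: "s \<ge> t0"
    show "((\<lambda>s. U s powr r - (real m - 1) * c1 * s) has_real_derivative W' s - (real m - 1) * c1 * 1) (at s within {t0..})"
      by (intro DERIV_diff Wd[OF s] DERIV_cmult DERIV_ident)
    show "0 \<le> W' s - (real m - 1) * c1 * 1" using Wb[OF s] by simp
  qed (use t in auto)
  have 2: "(real m - 1) * c2 * t0 - U t0 powr r \<le> (real m - 1) * c2 * t - U t powr r"
  proof (rule incr_within[of t0 "\<lambda>s. (real m - 1) * c2 * s - U s powr r" "\<lambda>s. (real m - 1) * c2 * 1 - W' s"])
    fix s assume s: "s \<ge> t0"
    show "((\<lambda>s. (real m - 1) * c2 * s - U s powr r) has_real_derivative (real m - 1) * c2 * 1 - W' s) (at s within {t0..})"
      by (intro DERIV_diff Wd[OF s] DERIV_cmult DERIV_ident)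
    show "0 \<le> (real m - 1) * c2 * 1 - W' s" using Wb[OF s] by simp
  qed (use t in auto)
  show ?thesis using 1 2 unfolding r_def by (simp add: right_diff_distrib)
qed

lemma compar_power:
  assumes m1: "m > 1"
  shows "comparable G \<rho>0 (\<lambda>\<phi>. \<bar>\<phi>\<bar> powr (- 1 / (real m - 1))) at_top"
proof -
  define \<alpha> where "\<alpha> = 1 / (real m - 1)"
  have \<alpha>: "\<alpha> > 0" using m1 by (simp add: \<alpha>_def)
  define W where "W t = U t powr (1 - real m)" for t
  define a1 where "a1 = (real m - 1) * c1"
  define a2 where "a2 = (real m - 1) * c2"
  have a: "a1 > 0" "a2 > 0" using m1 c1 c2 by (auto simp: a1_def a2_def)
  have W0: "W t0 > 0" using Upos0[of t0] by (simp add: W_def)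
  define b1 where "b1 = a1 / 2"
  define b2 where "b2 = W t0 + a2 + a2 * \<bar>t0\<bar>"
  have b: "b1 > 0" "b2 > 0" using a W0 by (auto simp: b1_def b2_def intro!: add_pos_nonneg)
  define T where "T = max (max (2 * \<bar>t0\<bar>) 1) t0"
  have Wb: "b1 * t \<le> W t \<and> W t \<le> b2 * t" if t: "t \<ge> T" for t
  proof -
    have t0t: "t \<ge> t0" "t \<ge> 1" "t \<ge> 2 * \<bar>t0\<bar>" using t by (auto simp: T_def)
    have wb: "W t0 + a1 * (t - t0) \<le> W t" "W t \<le> W t0 + a2 * (t - t0)"
      using W_bounds[OF m1 t0t(1)] by (auto simp: W_def a1_def a2_def)
    have "t - t0 \<ge> t / 2" using t0t by linarith
    then have "a1 * (t / 2) \<le> a1 * (t - t0)" using a by (intro mult_left_mono) auto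
    then have l: "b1 * t \<le> W t" using wb W0 by (simp add: b1_def)
    have "- t0 \<le> \<bar>t0\<bar>" by simp
    then have "a2 * (- t0) \<le> a2 * \<bar>t0\<bar>" using a by (intro mult_left_mono) auto
    then have "a2 * (t - t0) \<le> a2 * t + a2 * \<bar>t0\<bar>" by (simp add: right_diff_distrib)
    moreover have "W t0 * 1 \<le> W t0 * t" by (rule mult_left_mono) (use t0t W0 in auto)
    moreover have "(a2 * \<bar>t0\<bar>) * 1 \<le> (a2 * \<bar>t0\<bar>) * t" by (rule mult_left_mono) (use t0t a in auto)
    moreover have "b2 * t = W t0 * t + a2 * t + (a2 * \<bar>t0\<bar>) * t" by (simp add: b2_def distrib_right)
    ultimately have "W t \<le> b2 * t" using wb(2) by linarith
    then show ?thesis using l by simp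
  qed
  have UW: "U t = W t powr (- \<alpha>)" if "t \<ge> t0" for t
  proof -
    have "W t powr (- \<alpha>) = U t powr ((1 - real m) * (- \<alpha>))" by (simp add: W_def powr_powr)
    also have "(1 - real m) * (- \<alpha>) = 1" using m1 by (simp add: \<alpha>_def field_simps)
    finally show ?thesis using Upos0[OF that] by simp
  qed
  show ?thesis unfolding comparable_def
  proof (intro exI conjI)
    show "b2 powr (- \<alpha>) > 0" "b1 powr (- \<alpha>) > 0" using b by auto
    show "\<forall>\<^sub>F \<phi> in at_top. b2 powr (- \<alpha>) * \<bar>\<phi>\<bar> powr (- 1 / (real m - 1)) \<le> \<bar>G \<phi> - \<rho>0\<bar> \<and>
          \<bar>G \<phi> - \<rho>0\<bar> \<le> b1 powr (- \<alpha>) * \<bar>\<phi>\<bar> powr (- 1 / (real m - 1))"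
      unfolding eventually_at_top_linorder
    proof (intro exI allI impI)
      fix t assume t: "t \<ge> T"
      have t0t: "t \<ge> t0" "t \<ge> 1" using t by (auto simp: T_def)
      have e: "- 1 / (real m - 1) = - \<alpha>" by (simp add: \<alpha>_def)
      have abs: "\<bar>G t - \<rho>0\<bar> = U t" using U_abs[of t] t0t t0 by simp
      have tp: "t > 0" "\<bar>t\<bar> = t" using t0t by auto
      have bt: "b1 * t > 0" "b2 * t > 0" using b tp by auto
      have up: "W t powr (- \<alpha>) \<le> (b1 * t) powr (- \<alpha>)"
        by (rule powr_mono2') (use \<alpha> bt Wb[OF t] in auto)
      have lo: "(b2 * t) powr (- \<alpha>) \<le> W t powr (- \<alpha>)"
        by (rule powr_mono2') (use \<alpha> bt Wb[OF t] in auto)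
      show "b2 powr (- \<alpha>) * \<bar>t\<bar> powr (- 1 / (real m - 1)) \<le> \<bar>G t - \<rho>0\<bar> \<and>
          \<bar>G t - \<rho>0\<bar> \<le> b1 powr (- \<alpha>) * \<bar>t\<bar> powr (- 1 / (real m - 1))"
        using up lo unfolding e abs tp(2) UW[OF t0t(1)] by (simp add: powr_mult b tp)
    qed
  qed
qed

end


lemma exp_der: "((\<lambda>s. C * exp (- c * (s - a))) has_real_derivative (- c * C * exp (- c * (s - a)))) (at s within S)"
proof -
  have "((\<lambda>s. C * exp (- c * (s - a))) has_real_derivative C * (exp (- c * (s - a)) * (- c * (1 - 0)))) (at s within S)"
    by (intro DERIV_cmult DERIV_chain2[OF DERIV_exp] DERIV_diff DERIV_ident DERIV_const)
  then show ?thesis by (simp add: mult_ac)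
qed

lemma alg1: fixes u r F D \<sigma> :: real
  shows "u \<noteq> 0 \<Longrightarrow> (\<sigma> * (- (r+u) * F)) / u + \<sigma>*(r*D) = - \<sigma> * (u*D + (r+u)*(F - D*u)/u)"
  by (simp add: field_simps)

locale spir3 = spir2 +
  fixes M Dd :: real
  assumes m_one: "m = 1"
  and so: "\<And>x. \<bar>x - \<rho>0\<bar> \<le> \<delta> \<Longrightarrow> \<bar>f x - Dd * (x - \<rho>0)\<bar> \<le> M * (x - \<rho>0)^2"
begin

lemma decay: assumes t: "t \<ge> t0" shows "U t \<le> U t0 * exp (- c1 * (t - t0))"
proof -
  have D: "((\<lambda>s. ln (U s) + c1 * s) has_real_derivative 1 / U s * Ud s + c1) (at s within {t0..})"
    if s: "s \<ge> t0" for s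
  proof -
    have "((\<lambda>s. ln (U s) + c1 * s) has_real_derivative 1 / U s * Ud s + c1 * 1) (at s within {t0..})"
      by (intro DERIV_add lnU_der[OF s] DERIV_cmult DERIV_ident)
    then show ?thesis by simp
  qed
  have N: "1 / U s * Ud s + c1 \<le> 0" if s: "s \<ge> t0" for s
  proof -
    have "Ud s \<le> - c1 * U s" using kp[OF s] m_one by simp
    then have "Ud s / U s \<le> - c1" using Upos0[OF s] by (simp add: field_simps)
    then show ?thesis by simp
  qed
  have "ln (U t) + c1 * t \<le> ln (U t0) + c1 * t0"
    using decr_within[of t0 "\<lambda>s. ln (U s) + c1 * s" "\<lambda>s. 1 / U s * Ud s + c1", OF D N, of t0 t] t by simp
  then have "ln (U t) \<le> ln (U t0) + (- c1 * (t - t0))" by (simp add: algebra_simps)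
  then have "exp (ln (U t)) \<le> exp (ln (U t0) + (- c1 * (t - t0)))" by simp
  also have "exp (ln (U t0) + (- c1 * (t - t0))) = exp (ln (U t0)) * exp (- c1 * (t - t0))" by (rule exp_add)
  also have "exp (ln (U t0)) = U t0" using Upos0[of t0] by simp
  finally show ?thesis using Upos0[OF t] by simp
qed

definition K :: real where "K = \<bar>Dd\<bar> + 2 * \<rho>0 * \<bar>M\<bar>"

lemma qder_bound:
  assumes s: "s \<ge> t0"
  shows "\<bar>1 / U s * Ud s + \<sigma> * (\<rho>0 * Dd)\<bar> \<le> K * U s"
proof -
  define u where "u = G s - \<rho>0"
  have Ua: "U s = \<bar>u\<bar>" using U_abs[of s] s t0 by (simp add: u_def)
  have Up: "U s > 0" using Upos0[OF s] .
  have u0: "u \<noteq> 0" using Ua Up by auto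
  have uU: "\<bar>u\<bar> \<le> \<delta>" using kp[OF s] Ua by simp
  define R where "R = f (G s) - Dd * u"
  have R: "\<bar>R\<bar> \<le> M * u^2" using so[of "G s"] uU by (simp add: R_def u_def)
  have Rb: "\<bar>R\<bar> \<le> \<bar>M\<bar> * \<bar>u\<bar> * \<bar>u\<bar>"
  proof -
    have "M * u^2 \<le> \<bar>M\<bar> * u^2" by (rule mult_right_mono) auto
    moreover have "u^2 = \<bar>u\<bar> * \<bar>u\<bar>" by (simp add: power2_eq_square)
    ultimately show ?thesis using R by (simp add: mult.assoc)
  qed
  have "\<bar>u\<bar> \<le> \<rho>0/2" using kp[OF s] Ua by simp
  moreover have "u \<le> \<bar>u\<bar>" by simp
  ultimately have Gb: "0 \<le> G s" "G s \<le> 2 * \<rho>0" using Gpos[of s] s t0 r0 by (auto simp: u_def)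
  have Us: "U s = s0 * u" by (simp add: U_def u_def)
  have Gu: "G s = \<rho>0 + u" by (simp add: u_def)
  have "1 / U s * Ud s = (s0 * (\<sigma> * (- G s * f (G s)))) / (s0 * u)"
    unfolding Us Ud_def by simp
  also have "\<dots> = \<sigma> * (- G s * f (G s)) / u"
    using s0 by (elim disjE) simp_all
  finally have e1: "1 / U s * Ud s = \<sigma> * (- (\<rho>0 + u) * f (G s)) / u" by (simp add: Gu)
  have e: "1 / U s * Ud s + \<sigma> * (\<rho>0 * Dd) = - \<sigma> * (u * Dd + G s * R / u)"
    unfolding e1 R_def Gu by (rule alg1[OF u0])
  have "\<bar>u * Dd + G s * R / u\<bar> \<le> \<bar>u\<bar> * \<bar>Dd\<bar> + G s * \<bar>R\<bar> / \<bar>u\<bar>"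
    using Gb by (simp add: abs_mult abs_divide abs_triangle_ineq[THEN order_trans])
  also have "G s * \<bar>R\<bar> / \<bar>u\<bar> \<le> 2 * \<rho>0 * \<bar>M\<bar> * \<bar>u\<bar>"
  proof -
    have "\<bar>R\<bar> / \<bar>u\<bar> \<le> \<bar>M\<bar> * \<bar>u\<bar>" using Rb u0 by (simp add: field_simps)
    moreover have "\<bar>R\<bar> / \<bar>u\<bar> \<ge> 0" by simp
    ultimately have "G s * (\<bar>R\<bar> / \<bar>u\<bar>) \<le> 2 * \<rho>0 * (\<bar>M\<bar> * \<bar>u\<bar>)"
      using Gb by (intro mult_mono) auto
    then show ?thesis by (simp add: mult.assoc)
  qed
  finally have "\<bar>u * Dd + G s * R / u\<bar> \<le> K * \<bar>u\<bar>" by (simp add: K_def algebra_simps)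
  then show ?thesis using e sig Ua by (auto simp: abs_mult)
qed

lemma compar_exp:
  "comparable G \<rho>0 (\<lambda>\<phi>. exp (- (\<sigma> * (\<rho>0 * Dd)) * \<phi>)) at_top"
proof -
  define \<beta> where "\<beta> = \<sigma> * (\<rho>0 * Dd)"
  define q where "q s = ln (U s) + \<beta> * s" for s
  define A where "A = U t0"
  define B where "B = K * A / c1"
  have K0: "K \<ge> 0" using r0 by (simp add: K_def)
  have A0: "A > 0" using Upos0[of t0] by (simp add: A_def)
  have qd: "(q has_real_derivative 1 / U s * Ud s + \<beta>) (at s within {t0..})" if s: "s \<ge> t0" for s
  proof -
    have "((\<lambda>s. ln (U s) + \<beta> * s) has_real_derivative 1 / U s * Ud s + \<beta> * 1) (at s within {t0..})"
      by (intro DERIV_add lnU_der[OF s] DERIV_cmult DERIV_ident)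
    then show ?thesis by (simp add: q_def[abs_def])
  qed
  have qb: "\<bar>1 / U s * Ud s + \<beta>\<bar> \<le> K * A * exp (- c1 * (s - t0))" if s: "s \<ge> t0" for s
  proof -
    have "K * U s \<le> K * (A * exp (- c1 * (s - t0)))"
      using decay[OF s] K0 by (intro mult_left_mono) (auto simp: A_def)
    then show ?thesis using qder_bound[OF s] by (simp add: \<beta>_def mult.assoc)
  qed
  have up: "q t \<le> q t0 + B" if t: "t \<ge> t0" for t
  proof -
    have "q t + B * exp (- c1 * (t - t0)) \<le> q t0 + B * exp (- c1 * (t0 - t0))"
    proof (rule decr_within[of t0 "\<lambda>s. q s + B * exp (- c1 * (s - t0))"
          "\<lambda>s. (1 / U s * Ud s + \<beta>) + (- c1 * B * exp (- c1 * (s - t0)))"])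
      fix s assume s: "s \<ge> t0"
      show "((\<lambda>s. q s + B * exp (- c1 * (s - t0))) has_real_derivative
          (1 / U s * Ud s + \<beta>) + (- c1 * B * exp (- c1 * (s - t0)))) (at s within {t0..})"
        by (intro DERIV_add qd[OF s] exp_der)
      have "c1 * B = K * A" using c1 by (simp add: B_def)
      then show "(1 / U s * Ud s + \<beta>) + (- c1 * B * exp (- c1 * (s - t0))) \<le> 0"
        using qb[OF s] by (simp add: abs_le_iff)
    qed (use t in auto)
    moreover have "B * exp (- c1 * (t - t0)) \<ge> 0" using K0 A0 c1 by (simp add: B_def)
    ultimately show ?thesis by simp
  qed
  have lo: "q t0 - B \<le> q t" if t: "t \<ge> t0" for t
  proof -
    have "q t0 - B * exp (- c1 * (t0 - t0)) \<le> q t - B * exp (- c1 * (t - t0))"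
    proof -
      have "q t0 + (- B) * exp (- c1 * (t0 - t0)) \<le> q t + (- B) * exp (- c1 * (t - t0))"
      proof (rule incr_within[of t0 "\<lambda>s. q s + (- B) * exp (- c1 * (s - t0))"
          "\<lambda>s. (1 / U s * Ud s + \<beta>) + (- c1 * (- B) * exp (- c1 * (s - t0)))"])
        fix s assume s: "s \<ge> t0"
        show "((\<lambda>s. q s + (- B) * exp (- c1 * (s - t0))) has_real_derivative
            (1 / U s * Ud s + \<beta>) + (- c1 * (- B) * exp (- c1 * (s - t0)))) (at s within {t0..})"
          by (intro DERIV_add qd[OF s] exp_der)
        have "c1 * B = K * A" using c1 by (simp add: B_def)
        then show "0 \<le> (1 / U s * Ud s + \<beta>) + (- c1 * (- B) * exp (- c1 * (s - t0)))"
          using qb[OF s] by (simp add: abs_le_iff)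
      qed (use t in auto)
      then show ?thesis by simp
    qed
    moreover have "B * exp (- c1 * (t - t0)) \<ge> 0" using K0 A0 c1 by (simp add: B_def)
    ultimately show ?thesis by simp
  qed
  have Ueq: "U t = exp (q t) * exp (- \<beta> * t)" if t: "t \<ge> t0" for t
    using Upos0[OF t] by (simp add: q_def exp_add[symmetric])
  show ?thesis unfolding comparable_def \<beta>_def[symmetric]
  proof (intro exI conjI)
    show "exp (q t0 - B) > 0" "exp (q t0 + B) > 0" by auto
    show "\<forall>\<^sub>F \<phi> in at_top. exp (q t0 - B) * exp (- \<beta> * \<phi>) \<le> \<bar>G \<phi> - \<rho>0\<bar> \<and>
          \<bar>G \<phi> - \<rho>0\<bar> \<le> exp (q t0 + B) * exp (- \<beta> * \<phi>)"
      unfolding eventually_at_top_linorder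
    proof (intro exI[of _ t0] allI impI)
      fix t assume t: "t \<ge> t0"
      have abs: "\<bar>G t - \<rho>0\<bar> = U t" using U_abs[of t] t t0 by simp
      show "exp (q t0 - B) * exp (- \<beta> * t) \<le> \<bar>G t - \<rho>0\<bar> \<and>
          \<bar>G t - \<rho>0\<bar> \<le> exp (q t0 + B) * exp (- \<beta> * t)"
        unfolding abs Ueq[OF t] using up[OF t] lo[OF t] by simp
    qed
  qed
qed

end


lemma content_ball2: "r \<ge> 0 \<Longrightarrow> measure lborel (ball (c::real\<times>real) r) = pi * r^2"
  using content_ball[of r c] by (simp add: unit_ball_vol_2 power2_eq_square)

lemma content_cball2: "r \<ge> 0 \<Longrightarrow> measure lborel (cball (c::real\<times>real) r) = pi * r^2"
  using content_cball_conv_ball[of c r] content_ball2[of r c] by simp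

lemma annulus_measure:
  assumes "0 \<le> a" "a < b"
  shows "measure lborel (ball (0::real\<times>real) b - cball 0 a) = pi * (b^2 - a^2)"
proof -
  have "measure lborel (ball (0::real\<times>real) b - cball 0 a) = measure lborel (ball (0::real\<times>real) b) - measure lborel (cball (0::real\<times>real) a)"
  proof (rule measure_Diff)
    show "emeasure lborel (ball (0::real\<times>real) b) \<noteq> \<infinity>"
      using emeasure_lborel_ball_finite[of "0::real\<times>real" b] by (simp add: less_top)
  qed (use assms in auto)
  then show ?thesis using assms by (simp add: content_ball2 content_cball2 algebra_simps)
qed

lemma norm_polar: "norm (r * cos t, r * sin t) = \<bar>r\<bar>"
proof -
  have "norm (r * cos t, r * sin t) = sqrt ((r * cos t)^2 + (r * sin t)^2)" by (simp add: norm_Pair)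
  also have "(r * cos t)^2 + (r * sin t)^2 = r^2" by (simp add: power_mult_distrib flip: distrib_left)
  finally show ?thesis by simp
qed

lemma polar_exists: "\<exists>\<theta>. p = (norm p * cos \<theta>, norm p * sin \<theta>)"
proof -
  obtain x y where p: "p = (x, y)" by (cases p)
  define z where "z = Complex (fst p) (snd p)"
  have n: "norm p = cmod z" by (simp add: z_def norm_Pair cmod_def p)
  have "z = rcis (cmod z) (Arg z)" by (simp add: rcis_cmod_Arg)
  then have "fst p = cmod z * cos (Arg z)" "snd p = cmod z * sin (Arg z)"
    by (metis Re_rcis complex.sel(1) z_def, metis Im_rcis complex.sel(2) z_def)
  then show ?thesis using n by (intro exI[of _ "Arg z"]) (simp add: prod_eq_iff)
qed

lemma cos_lip: fixes x y :: real shows "\<bar>cos x - cos y\<bar> \<le> \<bar>x - y\<bar>"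
proof (cases "x = y")
  case False
  obtain z where "cos x - cos y = (x - y) * (- sin z)"
  proof (cases "x < y")
    case True
    then obtain z where "cos y - cos x = (y - x) * (- sin z)"
      using MVT2[of x y cos "\<lambda>t. - sin t"] by (auto intro: derivative_eq_intros)
    then show ?thesis using that[of z] by (simp add: algebra_simps)
  next
    case False
    then have "y < x" using \<open>x \<noteq> y\<close> by auto
    then obtain z where "cos x - cos y = (x - y) * (- sin z)"
      using MVT2[of y x cos "\<lambda>t. - sin t"] by (auto intro: derivative_eq_intros)
    then show ?thesis using that[of z] by simp
  qed
  then have "\<bar>cos x - cos y\<bar> = \<bar>x - y\<bar> * \<bar>sin z\<bar>" by (simp add: abs_mult)
  also have "\<dots> \<le> \<bar>x - y\<bar> * 1" by (intro mult_left_mono) auto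
  finally show ?thesis by simp
qed simp

lemma sin_lip: fixes x y :: real shows "\<bar>sin x - sin y\<bar> \<le> \<bar>x - y\<bar>"
proof (cases "x = y")
  case False
  obtain z where "sin x - sin y = (x - y) * cos z"
  proof (cases "x < y")
    case True
    then obtain z where "sin y - sin x = (y - x) * cos z"
      using MVT2[of x y sin cos] by (auto intro: derivative_eq_intros)
    then show ?thesis using that[of z] by (simp add: algebra_simps)
  next
    case False
    then have "y < x" using \<open>x \<noteq> y\<close> by auto
    then obtain z where "sin x - sin y = (x - y) * cos z"
      using MVT2[of y x sin cos] by (auto intro: derivative_eq_intros)
    then show ?thesis using that[of z] by simp
  qed
  then have "\<bar>sin x - sin y\<bar> = \<bar>x - y\<bar> * \<bar>cos z\<bar>" by (simp add: abs_mult)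
  also have "\<dots> \<le> \<bar>x - y\<bar> * 1" by (intro mult_left_mono) auto
  finally show ?thesis by simp
qed simp

lemma prod_lip:
  fixes g :: "real \<Rightarrow> real" and h :: "real \<Rightarrow> real"
  assumes "\<bar>g x - g y\<bar> \<le> L * \<bar>x - y\<bar>" "\<bar>g y\<bar> \<le> B" "\<bar>h x - h y\<bar> \<le> \<bar>x - y\<bar>" "\<bar>h x\<bar> \<le> 1"
  shows "\<bar>g x * h x - g y * h y\<bar> \<le> (L + B) * \<bar>x - y\<bar>"
proof -
  have Lnn: "0 \<le> L * \<bar>x - y\<bar>" using assms(1) by (meson abs_ge_zero order_trans)
  have "g x * h x - g y * h y = (g x - g y) * h x + g y * (h x - h y)" by (simp add: algebra_simps)
  then have "\<bar>g x * h x - g y * h y\<bar> \<le> \<bar>g x - g y\<bar> * \<bar>h x\<bar> + \<bar>g y\<bar> * \<bar>h x - h y\<bar>"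
    by (simp add: abs_mult[symmetric] abs_triangle_ineq)
  also have "\<bar>g x - g y\<bar> * \<bar>h x\<bar> \<le> L * \<bar>x - y\<bar> * 1"
    by (intro mult_mono assms Lnn) auto
  also have "\<bar>g y\<bar> * \<bar>h x - h y\<bar> \<le> B * \<bar>x - y\<bar>"
    by (intro mult_mono assms) (use assms(2) in auto)
  finally show ?thesis by (simp add: algebra_simps)
qed

lemma cont_bounded_interval:
  fixes h :: "real \<Rightarrow> real"
  assumes "continuous_on {a..b} h"
  shows "\<exists>B. \<forall>t\<in>{a..b}. \<bar>h t\<bar> \<le> B"
proof -
  have "bounded (h ` {a..b})" by (rule compact_imp_bounded, rule compact_continuous_image[OF assms]) auto
  then show ?thesis unfolding bounded_iff by (metis image_eqI real_norm_def)
qed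



lemma fmeas_bounded:
  fixes A :: "(real \<times> real) set"
  assumes "A \<in> sets lborel" "bounded A"
  shows "A \<in> fmeasurable lborel"
  by (rule fmeasurableI[OF assms(1) emeasure_bounded_finite[OF assms(2)]])

lemma eps_nbhd_open: "open (eps_nbhd B e)"
  unfolding eps_nbhd_def by auto

lemma eps_nbhd_bounded:
  assumes "\<And>b. b \<in> B \<Longrightarrow> norm b \<le> R"
  shows "eps_nbhd B e \<subseteq> ball 0 (R + e)"
proof
  fix x assume "x \<in> eps_nbhd B e"
  then obtain b where b: "b \<in> B" "dist b x < e" unfolding eps_nbhd_def by auto
  have "norm x \<le> norm b + dist b x" by (metis dist_norm norm_minus_commute norm_triangle_sub add.commute)
  then show "x \<in> ball 0 (R + e)" using assms[OF b(1)] b(2) by (simp add: dist_norm)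
qed

locale spir4 = spir2 +
  assumes fcont: "\<And>x. x > 0 \<Longrightarrow> isCont f x"
begin

definition \<gamma> :: "real \<Rightarrow> real \<times> real" where "\<gamma> t = (G t * cos t, \<sigma> * (G t * sin t))"
definition S :: "(real \<times> real) set" where "S = \<gamma> ` {t1..}"

lemma gamma_norm: "t \<ge> t1 \<Longrightarrow> norm (\<gamma> t) = G t"
proof -
  assume t: "t \<ge> t1"
  have "norm (\<gamma> t) = sqrt ((G t * cos t)^2 + (\<sigma> * (G t * sin t))^2)" by (simp add: \<gamma>_def norm_Pair)
  also have "(\<sigma> * (G t * sin t))^2 = (G t * sin t)^2" using sigsq by (simp add: power_mult_distrib power2_eq_square)
  also have "sqrt ((G t * cos t)^2 + (G t * sin t)^2) = norm (G t * cos t, G t * sin t)" by (simp add: norm_Pair)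
  also have "\<dots> = G t" using norm_polar Gpos[OF t] by simp
  finally show ?thesis .
qed

lemma bounds: "\<exists>B L. B \<ge> 0 \<and> L \<ge> 0 \<and> (\<forall>t\<ge>t1. \<bar>G t\<bar> \<le> B \<and> \<bar>\<sigma> * (- G t * f (G t))\<bar> \<le> L)"
proof -
  have cG: "continuous_on {t1..t0} G" by (rule continuous_on_subset[OF Gcont]) auto
  have cf: "continuous_on {0<..} f" by (intro continuous_at_imp_continuous_on ballI fcont) auto
  have cfG: "continuous_on {t1..t0} (\<lambda>t. f (G t))"
    by (rule continuous_on_compose2[OF cf cG]) (use Gpos in auto)
  have cd: "continuous_on {t1..t0} (\<lambda>t. \<sigma> * (- G t * f (G t)))"
    by (intro continuous_intros cG cfG)
  obtain B0 where B0: "\<And>t. t \<in> {t1..t0} \<Longrightarrow> \<bar>G t\<bar> \<le> B0" using cont_bounded_interval[OF cG] by blast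
  obtain L0 where L0: "\<And>t. t \<in> {t1..t0} \<Longrightarrow> \<bar>\<sigma> * (- G t * f (G t))\<bar> \<le> L0"
    using cont_bounded_interval[OF cd] by blast
  define B where "B = max B0 (2 * \<rho>0)"
  define L where "L = max L0 c2"
  have BL0: "B \<ge> 0" "L \<ge> 0" using r0 c2 by (auto simp: B_def L_def)
  have main: "\<forall>t\<ge>t1. \<bar>G t\<bar> \<le> B \<and> \<bar>\<sigma> * (- G t * f (G t))\<bar> \<le> L"
  proof (intro allI impI)
    fix t assume t: "t \<ge> t1"
    show "\<bar>G t\<bar> \<le> B \<and> \<bar>\<sigma> * (- G t * f (G t))\<bar> \<le> L"
    proof (cases "t \<le> t0")
      case True
      then show ?thesis using B0[of t] L0[of t] t by (auto simp: B_def L_def)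
    next
      case False
      then have tt: "t \<ge> t0" by simp
      have "\<bar>G t - \<rho>0\<bar> \<le> \<rho>0/2" using kp[OF tt] U_abs[OF t] by simp
      moreover have "G t - \<rho>0 \<le> \<bar>G t - \<rho>0\<bar>" "-(G t - \<rho>0) \<le> \<bar>G t - \<rho>0\<bar>" by simp_all
      ultimately have "\<bar>G t\<bar> \<le> 2 * \<rho>0" using r0 by (simp add: abs_le_iff)
      moreover have "\<bar>\<sigma> * (- G t * f (G t))\<bar> = \<bar>Ud t\<bar>" using s0 by (auto simp: Ud_def abs_mult)
      moreover have "\<bar>Ud t\<bar> \<le> c2"
      proof -
        have "U t ^ m \<le> 1" using kp[OF tt] Upos0[OF tt] by (simp add: power_le_one)
        then have "c2 * U t ^ m \<le> c2" using c2 by (simp add: mult_left_le)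
        moreover have "c1 * U t ^ m \<ge> 0" using c1 Upos0[OF tt] by simp
        ultimately show ?thesis using kp[OF tt] by (auto simp: abs_le_iff)
      qed
      ultimately show ?thesis by (auto simp: B_def L_def)
    qed
  qed
  show ?thesis using BL0 main by blast
qed

lemma lip: "\<exists>Lg>0. \<exists>B\<ge>0. (\<forall>t\<ge>t1. \<bar>G t\<bar> \<le> B) \<and> (\<forall>x\<ge>t1. \<forall>y\<ge>t1. dist (\<gamma> x) (\<gamma> y) \<le> Lg * \<bar>x - y\<bar>)"
proof -
  obtain B L where BL: "B \<ge> 0" "L \<ge> 0" "\<And>t. t \<ge> t1 \<Longrightarrow> \<bar>G t\<bar> \<le> B \<and> \<bar>\<sigma> * (- G t * f (G t))\<bar> \<le> L"
    using bounds by blast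
  have Glip: "\<bar>G x - G y\<bar> \<le> L * \<bar>x - y\<bar>" if xy: "x \<ge> t1" "y \<ge> t1" for x y
  proof -
    have gen: "\<bar>G b - G a\<bar> \<le> L * \<bar>b - a\<bar>" if ab: "t1 \<le> a" "a < b" for a b
    proof -
      obtain z where z: "a < z" "z < b" "G b - G a = (b - a) * (\<sigma> * (- G z * f (G z)))"
        using mvt_within[of t1 G "\<lambda>t. \<sigma> * (- G t * f (G t))" a b, OF Gder ab] by blast
      then have "\<bar>G b - G a\<bar> = \<bar>b - a\<bar> * \<bar>\<sigma> * (- G z * f (G z))\<bar>" by (simp add: abs_mult)
      also have "\<dots> \<le> \<bar>b - a\<bar> * L" using BL(3)[of z] z ab by (intro mult_left_mono) auto
      finally show ?thesis by (simp add: mult.commute)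
    qed
    show ?thesis
    proof (cases x y rule: linorder_cases)
      case less then show ?thesis using gen[of x y] xy by (simp add: abs_minus_commute)
    next
      case greater then show ?thesis using gen[of y x] xy by simp
    qed simp
  qed
  define Lg where "Lg = 2 * (L + B) + 1"
  have Lg0: "Lg > 0" using BL by (simp add: Lg_def)
  have Bb: "\<forall>t\<ge>t1. \<bar>G t\<bar> \<le> B" using BL by blast
  have main: "\<forall>x\<ge>t1. \<forall>y\<ge>t1. dist (\<gamma> x) (\<gamma> y) \<le> Lg * \<bar>x - y\<bar>"
    proof (intro allI impI)
      fix x y assume xy: "x \<ge> t1" "y \<ge> t1"
      have 1: "\<bar>G x * cos x - G y * cos y\<bar> \<le> (L + B) * \<bar>x - y\<bar>"
        by (rule prod_lip[OF Glip[OF xy]]) (use BL(3)[of y] xy cos_lip in auto)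
      have 2: "\<bar>G x * sin x - G y * sin y\<bar> \<le> (L + B) * \<bar>x - y\<bar>"
        by (rule prod_lip[OF Glip[OF xy]]) (use BL(3)[of y] xy sin_lip in auto)
      have "dist (\<gamma> x) (\<gamma> y) = norm (G x * cos x - G y * cos y, \<sigma> * (G x * sin x - G y * sin y))"
        by (simp add: \<gamma>_def dist_norm algebra_simps)
      also have "\<dots> \<le> norm (G x * cos x - G y * cos y) + norm (\<sigma> * (G x * sin x - G y * sin y))"
        by (rule norm_Pair_le)
      also have "\<dots> = \<bar>G x * cos x - G y * cos y\<bar> + \<bar>G x * sin x - G y * sin y\<bar>"
        using sig by (auto simp: abs_mult)
      also have "\<dots> \<le> (L + B) * \<bar>x - y\<bar> + (L + B) * \<bar>x - y\<bar>" using 1 2 by simp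
      also have "\<dots> \<le> Lg * \<bar>x - y\<bar>" unfolding Lg_def by (simp add: algebra_simps)
      finally show "dist (\<gamma> x) (\<gamma> y) \<le> Lg * \<bar>x - y\<bar>" .
    qed
  show ?thesis using Lg0 Bb main BL(1) by blast
qed

lemma S_bounded: "\<exists>R. \<forall>b\<in>S. norm b \<le> R"
proof -
  obtain Lg B where "\<forall>t\<ge>t1. \<bar>G t\<bar> \<le> B" using lip by blast
  then show ?thesis unfolding S_def using gamma_norm by (intro exI[of _ B]) auto
qed

lemma eps_fmeas: "eps_nbhd S e \<in> fmeasurable lborel"
proof -
  obtain R where R: "\<forall>b\<in>S. norm b \<le> R" using S_bounded by blast
  show ?thesis
    by (rule fmeas_bounded) (use eps_nbhd_open eps_nbhd_bounded[of S R e] R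
        in \<open>auto intro: bounded_subset[OF bounded_ball]\<close>)
qed

end


context spir4 begin

lemma area_upper:
  "\<exists>Lg>0. \<forall>\<epsilon> T. 0 < \<epsilon> \<and> t0 \<le> T \<and> U T + \<epsilon> < \<rho>0 \<longrightarrow>
     measure lborel (eps_nbhd S \<epsilon>) \<le> 4*pi*\<rho>0*(U T + \<epsilon>) + 4*pi*\<epsilon>^2 * ((T - t1) * Lg / \<epsilon> + 2)"
proof -
  obtain Lg B where Lg: "Lg > 0" "B \<ge> 0" "\<And>t. t \<ge> t1 \<Longrightarrow> \<bar>G t\<bar> \<le> B"
    "\<And>x y. x \<ge> t1 \<Longrightarrow> y \<ge> t1 \<Longrightarrow> dist (\<gamma> x) (\<gamma> y) \<le> Lg * \<bar>x - y\<bar>"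
    using lip by blast
  have main: "measure lborel (eps_nbhd S \<epsilon>) \<le> 4*pi*\<rho>0*(U T + \<epsilon>) + 4*pi*\<epsilon>^2 * ((T - t1) * Lg / \<epsilon> + 2)"
    if e: "0 < \<epsilon>" and T: "t0 \<le> T" and w: "U T + \<epsilon> < \<rho>0" for \<epsilon> T
  proof -
    define w where "w = U T + \<epsilon>"
    have w0: "w > 0" "w < \<rho>0" using Upos0[OF T] e w by (auto simp: w_def)
    define h where "h = \<epsilon> / Lg"
    have h0: "h > 0" using e Lg by (simp add: h_def)
    define N where "N = nat \<lceil>(T - t1) / h\<rceil>"
    define P where "P k = \<gamma> (t1 + real k * h)" for k
    define R1 where "R1 = ball (0::real\<times>real) (\<rho>0 + w) - cball 0 (\<rho>0 - w)"
    define C where "C = R1 \<union> (\<Union>k\<in>{..N}. ball (P k) (2*\<epsilon>))"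
    have Tt1: "T \<ge> t1" using T t0 by simp
    have cover: "eps_nbhd S \<epsilon> \<subseteq> C"
    proof
      fix x assume "x \<in> eps_nbhd S \<epsilon>"
      then obtain t where t: "t \<ge> t1" "dist (\<gamma> t) x < \<epsilon>" unfolding eps_nbhd_def S_def by auto
      show "x \<in> C"
      proof (cases "T \<le> t")
        case True
        have "\<bar>norm x - norm (\<gamma> t)\<bar> \<le> norm (x - \<gamma> t)" by (rule norm_triangle_ineq3)
        also have "\<dots> = dist (\<gamma> t) x" by (simp add: dist_norm norm_minus_commute)
        finally have d: "\<bar>norm x - G t\<bar> < \<epsilon>" using t gamma_norm[OF t(1)] by simp
        have "U t \<le> U T" using U_decr[OF T True] .
        moreover have "\<bar>G t - \<rho>0\<bar> = U t" using U_abs[OF t(1)] by simp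
        ultimately have "\<bar>norm x - \<rho>0\<bar> < w" using d unfolding w_def by linarith
        then have "x \<in> R1" unfolding R1_def by (auto simp: dist_norm abs_less_iff)
        then show ?thesis by (simp add: C_def)
      next
        case False
        define a where "a = (t - t1) / h"
        have a0: "a \<ge> 0" using t h0 by (simp add: a_def)
        define k where "k = nat \<lfloor>a\<rfloor>"
        have rk: "real k = of_int \<lfloor>a\<rfloor>" using a0 by (simp add: k_def)
        have k1: "real k \<le> a" "a < real k + 1" using rk by linarith+
        have ta: "t = t1 + a * h" using h0 by (simp add: a_def)
        have "a \<le> (T - t1) / h" using False h0 by (simp add: a_def divide_right_mono)
        then have "\<lfloor>a\<rfloor> \<le> \<lceil>(T - t1) / h\<rceil>" by (meson floor_le_ceiling le_floor_iff order_trans ceiling_le_iff le_of_int_ceiling floor_le_iff)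
        then have kN: "k \<le> N" unfolding k_def N_def by (simp add: nat_mono)
        have pk: "t1 + real k * h \<ge> t1" using h0 by simp
        have "\<bar>t1 + real k * h - t\<bar> \<le> h"
        proof -
          have "t1 + real k * h \<le> t" using ta k1 h0 by (simp add: mult_right_mono)
          moreover have "t - (t1 + real k * h) = (a - real k) * h" using ta by (simp add: algebra_simps)
          moreover have "(a - real k) * h \<le> 1 * h" using k1 h0 by (intro mult_right_mono) auto
          ultimately show ?thesis by simp
        qed
        then have "dist (P k) (\<gamma> t) \<le> Lg * h"
          using Lg(4)[OF pk t(1)] Lg(1) unfolding P_def
          by (meson mult_left_mono order_trans less_imp_le)
        also have "Lg * h = \<epsilon>" using Lg by (simp add: h_def)
        finally have "dist (P k) x < 2 * \<epsilon>" using t(2) dist_triangle[of "P k" x "\<gamma> t"] by linarith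
        then show ?thesis using kN unfolding C_def by auto
      qed
    qed
    have R1s: "R1 \<in> sets lborel" by (simp add: R1_def)
    have Us: "(\<Union>k\<in>{..N}. ball (P k) (2*\<epsilon>)) \<in> sets lborel" by auto
    have Cb: "bounded C" unfolding C_def R1_def by auto
    have Cf: "C \<in> fmeasurable lborel" by (rule fmeas_bounded) (use R1s Us Cb in \<open>auto simp: C_def\<close>)
    have "measure lborel (eps_nbhd S \<epsilon>) \<le> measure lborel C"
      by (rule measure_mono_fmeasurable[OF cover _ Cf]) (simp add: eps_nbhd_open)
    also have "\<dots> \<le> measure lborel R1 + measure lborel (\<Union>k\<in>{..N}. ball (P k) (2*\<epsilon>))"
      unfolding C_def by (rule measure_Un_le[OF R1s Us])
    also have "measure lborel (\<Union>k\<in>{..N}. ball (P k) (2*\<epsilon>)) \<le> (\<Sum>k\<in>{..N}. measure lborel (ball (P k) (2*\<epsilon>)))"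
      by (rule measure_UNION_le) auto
    also have "\<dots> = real (Suc N) * (pi * (2*\<epsilon>)^2)" using e by (simp add: content_ball2)
    also have "measure lborel R1 = pi * ((\<rho>0 + w)^2 - (\<rho>0 - w)^2)"
      unfolding R1_def by (rule annulus_measure) (use w0 in auto)
    also have "pi * ((\<rho>0 + w)^2 - (\<rho>0 - w)^2) = 4*pi*\<rho>0*(U T + \<epsilon>)"
      by (simp add: w_def power2_eq_square algebra_simps)
    also have "real (Suc N) * (pi * (2*\<epsilon>)^2) \<le> 4*pi*\<epsilon>^2 * ((T - t1) * Lg / \<epsilon> + 2)"
    proof -
      have "real N = of_int \<lceil>(T - t1) / h\<rceil>" using Tt1 h0 by (simp add: N_def)
      then have "real N \<le> (T - t1) / h + 1" by linarith
      also have "(T - t1) / h = (T - t1) * Lg / \<epsilon>" using e Lg by (simp add: h_def)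
      finally have "real (Suc N) \<le> (T - t1) * Lg / \<epsilon> + 2" by simp
      then have "real (Suc N) * (4*pi*\<epsilon>^2) \<le> ((T - t1) * Lg / \<epsilon> + 2) * (4*pi*\<epsilon>^2)"
        by (rule mult_right_mono) simp
      then show ?thesis by (simp add: power_mult_distrib mult_ac)
    qed
    finally show ?thesis by simp
  qed
  show ?thesis using Lg(1) main by blast
qed

end


lemma sin_sigma: "\<sigma> = 1 \<or> \<sigma> = -1 \<Longrightarrow> sin (\<sigma> * x) = \<sigma> * sin x"
  by auto
lemma cos_sigma: "\<sigma> = 1 \<or> \<sigma> = -1 \<Longrightarrow> cos (\<sigma> * x) = cos x"
  by auto

lemma periodic_nat: "cos (x + 2 * pi * real j) = cos x \<and> sin (x + 2 * pi * real j) = sin x"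
proof -
  have "\<exists>n::int. x + 2 * pi * real j = x + 2 * pi * n" by (intro exI[of _ "int j"]) simp
  then show ?thesis using sin_cos_eq_iff by blast
qed

context spir4 begin

lemma annulus_in_nbhd:
  assumes e: "\<epsilon> > 0" and ts: "ts \<ge> t0" and y: "2*pi*c2 * U ts ^ m \<le> \<epsilon>"
    and p: "\<bar>norm p - \<rho>0\<bar> < U (ts + 2*pi)" "s0 * (norm p - \<rho>0) > 0"
  shows "p \<in> eps_nbhd S \<epsilon>"
proof -
  define r where "r = norm p"
  define d where "d = \<bar>r - \<rho>0\<bar>"
  have d0: "d > 0" using p(2) by (auto simp: d_def r_def)
  have sd: "r - \<rho>0 = s0 * d" using p(2) s0 by (auto simp: d_def r_def)
  obtain \<theta> where \<theta>: "p = (r * cos \<theta>, r * sin \<theta>)" using polar_exists unfolding r_def by blast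
  define \<theta>' where "\<theta>' = \<sigma> * \<theta>"
  define n where "n = \<lceil>(ts - \<theta>') / (2*pi)\<rceil>"
  define \<psi> where "\<psi> = \<theta>' + 2*pi*n"
  have pi0: "2*pi > 0" by simp
  have \<psi>1: "\<psi> \<ge> ts"
  proof -
    have "(ts - \<theta>') / (2*pi) \<le> n" by (simp add: n_def)
    then have "ts - \<theta>' \<le> n * (2*pi)" using pi0 by (simp add: divide_le_eq)
    then show ?thesis by (simp add: \<psi>_def mult_ac)
  qed
  have \<psi>2: "\<psi> \<le> ts + 2*pi"
  proof -
    have "n < (ts - \<theta>') / (2*pi) + 1" using ceiling_correct[of "(ts - \<theta>') / (2*pi)"] by (simp add: n_def)
    then have "n * (2*pi) < ((ts - \<theta>') / (2*pi) + 1) * (2*pi)" using pi0 by (intro mult_strict_right_mono) auto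
    then have "n * (2*pi) < ts - \<theta>' + 2*pi" using pi0 by (simp add: distrib_right)
    then show ?thesis by (simp add: \<psi>_def mult_ac)
  qed
  have cs\<psi>: "cos \<psi> = cos \<theta>' \<and> sin \<psi> = sin \<theta>'"
    using sin_cos_eq_iff[of \<psi> \<theta>'] by (auto simp: \<psi>_def)
  have cs: "cos (\<psi> + 2*pi*real j) = cos \<theta> \<and> \<sigma> * sin (\<psi> + 2*pi*real j) = sin \<theta>" for j
    using periodic_nat[of \<psi> j] cs\<psi> sig sigsq unfolding \<theta>'_def
    by (auto simp: sin_sigma cos_sigma)
  have \<psi>0: "\<psi> \<ge> t0" using \<psi>1 ts by simp
  have U\<psi>: "U \<psi> > d"
  proof -
    have "U (ts + 2*pi) \<le> U \<psi>" by (rule U_decr[OF \<psi>0 \<psi>2])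
    then show ?thesis using p(1) by (simp add: d_def r_def)
  qed
  have ex: "\<exists>j. U (\<psi> + 2*pi*real j) \<le> d"
  proof -
    have "eventually (\<lambda>t. U t < d) at_top" using U_lim d0 by (intro order_tendstoD) auto
    then obtain Tb where Tb: "\<And>t. t \<ge> Tb \<Longrightarrow> U t < d" unfolding eventually_at_top_linorder by blast
    obtain j :: nat where "(Tb - \<psi>) / (2*pi) < real j" using reals_Archimedean2 by blast
    then have "Tb - \<psi> < real j * (2*pi)" using pi0 by (simp add: divide_less_eq)
    then have "U (\<psi> + 2*pi*real j) < d" using Tb[of "\<psi> + 2*pi*real j"] by (simp add: mult_ac)
    then show ?thesis by (intro exI[of _ j]) simp
  qed
  define j0 where "j0 = (LEAST j. U (\<psi> + 2*pi*real j) \<le> d)"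
  have j0: "U (\<psi> + 2*pi*real j0) \<le> d" unfolding j0_def by (rule LeastI_ex[OF ex])
  have j0p: "j0 > 0" using j0 U\<psi> by (cases j0) auto
  define j1 where "j1 = j0 - 1"
  have j1: "U (\<psi> + 2*pi*real j1) > d"
  proof -
    have "j1 < j0" using j0p by (simp add: j1_def)
    then have "\<not> U (\<psi> + 2*pi*real j1) \<le> d" unfolding j0_def by (rule not_less_Least)
    then show ?thesis by simp
  qed
  define a where "a = \<psi> + 2*pi*real j1"
  have "2*pi*real j1 \<ge> 0" by simp
  then have a0: "a \<ge> ts" using \<psi>1 unfolding a_def by linarith
  have aj0: "\<psi> + 2*pi*real j0 = a + 2*pi" using j0p by (simp add: a_def j1_def of_nat_diff right_diff_distrib)
  have gp: "U a - U (a + 2*pi) \<le> \<epsilon>"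
  proof -
    have "U a - U (a + 2*pi) \<le> 2*pi*c2 * U a ^ m" using gap[of a] a0 ts by simp
    also have "U a ^ m \<le> U ts ^ m"
      by (rule power_mono[OF U_decr]) (use a0 ts Upos0[of a] in auto)
    then have "2*pi*c2 * U a ^ m \<le> 2*pi*c2 * U ts ^ m" using c2 by (intro mult_left_mono) auto
    finally show ?thesis using y by simp
  qed
  have "\<exists>t'. t' \<ge> t1 \<and> \<bar>U t' - d\<bar> < \<epsilon> \<and> cos t' = cos \<theta> \<and> \<sigma> * sin t' = sin \<theta>"
  proof (cases "U a - d \<le> \<epsilon>/2")
    case True
    then show ?thesis using j1 cs[of j1] a0 ts t0 e by (intro exI[of _ a]) (auto simp: a_def)
  next
    case False
    then have "d - U (a + 2*pi) < \<epsilon>/2" using gp by linarith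
    moreover have "a + 2*pi \<ge> t1" using a0 ts t0 pi_gt_zero by linarith
    ultimately show ?thesis using j0 cs[of j0] e aj0 by (intro exI[of _ "a + 2*pi"]) auto
  qed
  then obtain t' where t': "t' \<ge> t1" "\<bar>U t' - d\<bar> < \<epsilon>" "cos t' = cos \<theta>" "\<sigma> * sin t' = sin \<theta>" by blast
  have "\<gamma> t' - p = ((G t' - r) * cos \<theta>, (G t' - r) * sin \<theta>)"
    using t' \<theta> by (simp add: \<gamma>_def algebra_simps)
  then have "dist (\<gamma> t') p = \<bar>G t' - r\<bar>" by (simp add: dist_norm norm_polar)
  also have "G t' - r = s0 * (U t' - d)" using G_eq[of t'] sd s0 by (auto simp: algebra_simps)
  also have "\<bar>s0 * (U t' - d)\<bar> = \<bar>U t' - d\<bar>" using s0 by auto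
  finally have "dist (\<gamma> t') p < \<epsilon>" using t'(2) by simp
  then show ?thesis unfolding eps_nbhd_def S_def using t'(1) by auto
qed

end


context spir4 begin

lemma area_lower:
  "\<exists>\<kappa>>0. \<exists>\<epsilon>0>0. \<forall>\<epsilon>. 0 < \<epsilon> \<and> \<epsilon> \<le> \<epsilon>0 \<longrightarrow> \<kappa> * \<epsilon> powr (1 / real m) \<le> measure lborel (eps_nbhd S \<epsilon>)"
proof -
  define C where "C = 2*pi*c2"
  have C0: "C > 0" using c2 by (simp add: C_def)
  define \<epsilon>0 where "\<epsilon>0 = C * U t0 ^ m"
  have e00: "\<epsilon>0 > 0" using C0 Upos0[of t0] by (simp add: \<epsilon>0_def)
  define \<kappa> where "\<kappa> = pi * \<rho>0 * exp (- 2*pi*c2) / C powr (1 / real m)"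
  have k0: "\<kappa> > 0" using r0 C0 by (simp add: \<kappa>_def)
  have mp: "real m > 0" using m by simp
  have main: "\<kappa> * \<epsilon> powr (1 / real m) \<le> measure lborel (eps_nbhd S \<epsilon>)"
    if e: "0 < \<epsilon>" "\<epsilon> \<le> \<epsilon>0" for \<epsilon>
  proof -
    define y where "y = (\<epsilon> / C) powr (1 / real m)"
    have y0: "y > 0" using e C0 by (simp add: y_def)
    have ym: "y ^ m = \<epsilon> / C"
    proof -
      have "y ^ m = y powr real m" using y0 by (simp add: powr_realpow)
      also have "\<dots> = (\<epsilon> / C) powr (1 / real m * real m)" by (simp add: y_def powr_powr)
      also have "\<dots> = \<epsilon> / C" using mp e C0 by simp
      finally show ?thesis .
    qed
    have yU: "y \<le> U t0"
    proof -
      have le: "\<epsilon> / C \<le> U t0 ^ m" using e C0 by (simp add: \<epsilon>0_def divide_le_eq mult.commute)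
      have "y \<le> (U t0 ^ m) powr (1 / real m)" unfolding y_def
        by (rule powr_mono2) (use e C0 le in auto)
      also have "(U t0 ^ m) powr (1 / real m) = U t0"
        using Upos0[of t0] mp by (simp add: powr_realpow[symmetric] powr_powr)
      finally show ?thesis .
    qed
    have "eventually (\<lambda>t. U t < y) at_top" using U_lim y0 by (intro order_tendstoD) auto
    then obtain Tb0 where Tb0: "\<And>t. t \<ge> Tb0 \<Longrightarrow> U t < y" unfolding eventually_at_top_linorder by blast
    define Tb where "Tb = max Tb0 t0"
    have Tb: "Tb \<ge> t0" "U Tb \<le> y" using Tb0[of Tb] by (auto simp: Tb_def)
    obtain ts where ts: "t0 \<le> ts" "ts \<le> Tb" "U ts = y"
      using IVT2'[of U Tb y t0, OF Tb(2) yU Tb(1) continuous_on_subset[OF Ucont]] t0 by auto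
    define w where "w = U (ts + 2*pi)"
    have w0: "w \<ge> exp (- 2*pi*c2) * y" using ratio[OF ts(1)] ts(3) by (simp add: w_def)
    have "ts + 2*pi \<ge> t0" using ts(1) pi_gt_zero by linarith
    then have wpos: "w > 0" using Upos0[of "ts + 2*pi"] by (simp add: w_def)
    have wle: "w \<le> \<rho>0/2"
    proof -
      have "w \<le> U t0" unfolding w_def by (rule U_decr) (use \<open>ts + 2*pi \<ge> t0\<close> in auto)
      then show ?thesis using kp[of t0] by simp
    qed
    have yy: "2*pi*c2 * U ts ^ m \<le> \<epsilon>" using ym ts(3) C0 e by (simp add: C_def)
    define A where "A = (if s0 = 1 then ball (0::real\<times>real) (\<rho>0 + w) - cball 0 \<rho>0 else ball 0 \<rho>0 - cball 0 (\<rho>0 - w))"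
    have sub: "A \<subseteq> eps_nbhd S \<epsilon>"
    proof
      fix p assume p: "p \<in> A"
      have "\<bar>norm p - \<rho>0\<bar> < U (ts + 2*pi) \<and> s0 * (norm p - \<rho>0) > 0"
        using p s0 by (auto simp: A_def w_def dist_norm split: if_splits)
      then show "p \<in> eps_nbhd S \<epsilon>" using annulus_in_nbhd[OF e(1) ts(1) yy] by blast
    qed
    have mA: "measure lborel A \<ge> pi * \<rho>0 * w"
    proof (cases "s0 = 1")
      case True
      then have "measure lborel A = pi * ((\<rho>0 + w)^2 - \<rho>0^2)"
        unfolding A_def using annulus_measure[of \<rho>0 "\<rho>0 + w"] r0 wpos by simp
      moreover have "pi * ((\<rho>0 + w)^2 - \<rho>0^2) = pi * \<rho>0 * w + pi * (\<rho>0 * w + w^2)"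
        by (simp add: power2_eq_square algebra_simps)
      moreover have "pi * (\<rho>0 * w + w^2) \<ge> 0" using r0 wpos by simp
      ultimately show ?thesis by linarith
    next
      case False
      then have "measure lborel A = pi * (\<rho>0^2 - (\<rho>0 - w)^2)"
        unfolding A_def using annulus_measure[of "\<rho>0 - w" \<rho>0] wle wpos r0 by simp
      moreover have "pi * (\<rho>0^2 - (\<rho>0 - w)^2) = pi * \<rho>0 * w + pi * (w * (\<rho>0 - w))"
        by (simp add: power2_eq_square algebra_simps)
      moreover have "pi * (w * (\<rho>0 - w)) \<ge> 0" using wle wpos r0 by simp
      ultimately show ?thesis by linarith
    qed
    have "measure lborel A \<le> measure lborel (eps_nbhd S \<epsilon>)"
      by (rule measure_mono_fmeasurable[OF sub _ eps_fmeas]) (simp add: A_def)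
    moreover have "\<kappa> * \<epsilon> powr (1 / real m) = pi * \<rho>0 * exp (- 2*pi*c2) * y"
      using C0 by (simp add: \<kappa>_def y_def powr_divide)
    moreover have "pi * \<rho>0 * exp (- 2*pi*c2) * y \<le> pi * \<rho>0 * w"
      using w0 r0 by (simp add: mult.assoc)
    ultimately show ?thesis using mA by linarith
  qed
  show ?thesis using k0 e00 main by blast
qed

end


lemma inf_threshold:
  fixes P :: "real \<Rightarrow> bool"
  assumes "\<And>s. s > d \<Longrightarrow> P s" "\<And>s. s < d \<Longrightarrow> \<not> P s"
  shows "Inf {s. P s} = d"
proof -
  have ne: "{s. P s} \<noteq> {}" using assms(1)[of "d+1"] by auto
  have lb: "\<And>x. x \<in> {s. P s} \<Longrightarrow> d \<le> x" using assms(2) by force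
  have bdd: "bdd_below {s. P s}" using lb by (auto simp: bdd_below_def)
  have 1: "d \<le> Inf {s. P s}" by (rule cInf_greatest[OF ne lb])
  have 2: "Inf {s. P s} \<le> d + e" if "e > 0" for e
    by (rule cInf_lower[OF _ bdd]) (use assms(1) that in auto)
  have "Inf {s. P s} \<le> d"
  proof (rule ccontr)
    assume "\<not> Inf {s. P s} \<le> d"
    then have pos: "(Inf {s. P s} - d)/2 > 0" by simp
    have aux: "\<And>I::real. I \<le> d + (I - d)/2 \<Longrightarrow> \<not> I \<le> d \<Longrightarrow> False" by (simp add: field_simps)
    from 2[OF pos] show False using \<open>\<not> Inf {s. P s} \<le> d\<close> by (rule aux)
  qed
  then show ?thesis using 1 by simp
qed

lemma box_dim_generic:
  fixes A :: "real \<Rightarrow> real"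
  assumes hi: "\<And>s. s > d \<Longrightarrow> ((\<lambda>\<epsilon>. A \<epsilon> / \<epsilon> powr (2 - s)) \<longlongrightarrow> 0) (at_right 0)"
    and lo: "\<And>s. s < d \<Longrightarrow> eventually (\<lambda>\<epsilon>. A \<epsilon> / \<epsilon> powr (2 - s) \<ge> 1) (at_right 0)"
  shows "Inf {s. Limsup (at_right 0) (\<lambda>\<epsilon>. ereal (A \<epsilon> / \<epsilon> powr (2 - s))) = 0} = d"
    and "Inf {s. Liminf (at_right 0) (\<lambda>\<epsilon>. ereal (A \<epsilon> / \<epsilon> powr (2 - s))) = 0} = d"
proof -
  have nt: "\<not> trivial_limit (at_right (0::real))" by simp
  have L1: "Limsup (at_right 0) (\<lambda>\<epsilon>. ereal (A \<epsilon> / \<epsilon> powr (2 - s))) = 0"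
    "Liminf (at_right 0) (\<lambda>\<epsilon>. ereal (A \<epsilon> / \<epsilon> powr (2 - s))) = 0" if "s > d" for s
  proof -
    have T: "((\<lambda>\<epsilon>. ereal (A \<epsilon> / \<epsilon> powr (2 - s))) \<longlongrightarrow> ereal 0) (at_right 0)"
      by (rule tendsto_ereal[OF hi[OF that]])
    show "Limsup (at_right 0) (\<lambda>\<epsilon>. ereal (A \<epsilon> / \<epsilon> powr (2 - s))) = 0"
      using lim_imp_Limsup[OF nt T] by (simp add: zero_ereal_def)
    show "Liminf (at_right 0) (\<lambda>\<epsilon>. ereal (A \<epsilon> / \<epsilon> powr (2 - s))) = 0"
      using lim_imp_Liminf[OF nt T] by (simp add: zero_ereal_def)
  qed
  have L2: "Liminf (at_right 0) (\<lambda>\<epsilon>. ereal (A \<epsilon> / \<epsilon> powr (2 - s))) \<ge> 1"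
    "Limsup (at_right 0) (\<lambda>\<epsilon>. ereal (A \<epsilon> / \<epsilon> powr (2 - s))) \<ge> 1" if "s < d" for s
  proof -
    have "eventually (\<lambda>\<epsilon>. 1 \<le> ereal (A \<epsilon> / \<epsilon> powr (2 - s))) (at_right 0)"
      using lo[OF that] by eventually_elim (simp add: one_ereal_def)
    then show 1: "Liminf (at_right 0) (\<lambda>\<epsilon>. ereal (A \<epsilon> / \<epsilon> powr (2 - s))) \<ge> 1"
      by (rule Liminf_bounded)
    then show "Limsup (at_right 0) (\<lambda>\<epsilon>. ereal (A \<epsilon> / \<epsilon> powr (2 - s))) \<ge> 1"
      using Liminf_le_Limsup[OF nt] order_trans by blast
  qed
  show "Inf {s. Limsup (at_right 0) (\<lambda>\<epsilon>. ereal (A \<epsilon> / \<epsilon> powr (2 - s))) = 0} = d"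
    by (rule inf_threshold) (use L1 L2 in force)+
  show "Inf {s. Liminf (at_right 0) (\<lambda>\<epsilon>. ereal (A \<epsilon> / \<epsilon> powr (2 - s))) = 0} = d"
    by (rule inf_threshold) (use L1 L2 in force)+
qed

lemma has_box_dim_generic:
  assumes hi: "\<And>s. s > d \<Longrightarrow> ((\<lambda>\<epsilon>. measure lborel (eps_nbhd B \<epsilon>) / \<epsilon> powr (2 - s)) \<longlongrightarrow> 0) (at_right 0)"
    and lo: "\<And>s. s < d \<Longrightarrow> eventually (\<lambda>\<epsilon>. measure lborel (eps_nbhd B \<epsilon>) / \<epsilon> powr (2 - s) \<ge> 1) (at_right 0)"
  shows "has_box_dim B d"
  unfolding has_box_dim_def upper_box_dim_def lower_box_dim_def
  using box_dim_generic[of d "\<lambda>\<epsilon>. measure lborel (eps_nbhd B \<epsilon>)", OF hi lo] by auto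

lemma powr_to_0: "p > 0 \<Longrightarrow> ((\<lambda>x::real. x powr p) \<longlongrightarrow> 0) (at_right 0)"
proof (rule tendsto_zero_powrI[where b=p])
  show "\<forall>\<^sub>F x in at_right 0. 0 \<le> (x::real)"
    by (rule eventually_mono[OF eventually_at_right_less]) simp
qed (auto intro: tendsto_ident_at)



lemma alg2: fixes A1 A2 A3 A4 E1 E2 e Ct t Y :: real
  shows "(A1*E1 + A2*e + A3*e*(Ct*E2 + t) + A4*e^2) * Y = A1*(E1*Y) + A2*(e*Y) + A3*Ct*(e*E2*Y) + A3*t*(e*Y) + A4*(e^2*Y)"
  by (simp add: algebra_simps)

lemma powr_to_0C: "p > 0 \<Longrightarrow> ((\<lambda>x::real. C * x powr p) \<longlongrightarrow> 0) (at_right 0)"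
  using tendsto_mult_right_zero[OF powr_to_0, of p C] by simp

context spir4 begin

lemma box_lo:
  assumes s: "s < 2 - 1 / real m"
  shows "eventually (\<lambda>\<epsilon>. measure lborel (eps_nbhd S \<epsilon>) / \<epsilon> powr (2 - s) \<ge> 1) (at_right 0)"
proof -
  obtain \<kappa> \<epsilon>0 where k: "\<kappa> > 0" "\<epsilon>0 > 0"
    "\<And>\<epsilon>. 0 < \<epsilon> \<Longrightarrow> \<epsilon> \<le> \<epsilon>0 \<Longrightarrow> \<kappa> * \<epsilon> powr (1 / real m) \<le> measure lborel (eps_nbhd S \<epsilon>)"
    using area_lower by blast
  define p where "p = 2 - 1 / real m - s"
  have p0: "p > 0" using s by (simp add: p_def)
  define b where "b = min \<epsilon>0 (\<kappa> powr (1 / p))"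
  have b0: "b > 0" using k by (simp add: b_def)
  show ?thesis
    using eventually_at_right_real[OF b0]
  proof eventually_elim
    case (elim \<epsilon>)
    then have e: "0 < \<epsilon>" "\<epsilon> < b" by auto
    have A: "\<kappa> * \<epsilon> powr (1 / real m) \<le> measure lborel (eps_nbhd S \<epsilon>)"
      using k(3)[of \<epsilon>] e by (simp add: b_def)
    have X: "\<epsilon> powr (2 - s) > 0" using e by simp
    have "\<epsilon> powr p \<le> (\<kappa> powr (1 / p)) powr p"
      by (rule powr_mono2) (use p0 e in \<open>auto simp: b_def\<close>)
    also have "\<dots> = \<kappa>" using p0 k by (simp add: powr_powr)
    finally have ep: "\<epsilon> powr p \<le> \<kappa>" .
    have epp: "\<epsilon> powr p > 0" using e by simp
    have ex: "1 / real m - (2 - s) = - p" by (simp add: p_def)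
    have "\<kappa> * \<epsilon> powr (1 / real m) / \<epsilon> powr (2 - s) = \<kappa> * (\<epsilon> powr (1 / real m) / \<epsilon> powr (2 - s))"
      by simp
    also have "\<epsilon> powr (1 / real m) / \<epsilon> powr (2 - s) = \<epsilon> powr (1 / real m - (2 - s))"
      by (rule powr_diff[symmetric])
    also have "\<dots> = \<epsilon> powr (- p)" by (simp only: ex)
    also have "\<kappa> * \<epsilon> powr (- p) = \<kappa> / \<epsilon> powr p" by (simp add: powr_minus divide_inverse)
    also have "\<dots> \<ge> 1" using ep epp by simp
    finally have "1 \<le> \<kappa> * \<epsilon> powr (1 / real m) / \<epsilon> powr (2 - s)" .
    also have "\<dots> \<le> measure lborel (eps_nbhd S \<epsilon>) / \<epsilon> powr (2 - s)"
      by (rule divide_right_mono[OF A]) (use X in simp)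
    finally show ?case .
  qed
qed

lemma box_hi:
  assumes UT: "\<And>a. a > 0 \<Longrightarrow> \<exists>Cu Ct. eventually (\<lambda>\<epsilon>.
        (\<exists>T. t0 \<le> T \<and> U T \<le> Cu * \<epsilon> powr (1 / real m) \<and> T \<le> Ct * \<epsilon> powr (1 / real m - 1 - a))) (at_right 0)"
    and s: "s > 2 - 1 / real m"
  shows "((\<lambda>\<epsilon>. measure lborel (eps_nbhd S \<epsilon>) / \<epsilon> powr (2 - s)) \<longlongrightarrow> 0) (at_right 0)"
proof -
  define d where "d = 2 - 1 / real m"
  have d1: "d \<ge> 1" using m by (simp add: d_def)
  define a where "a = (s - d) / 2"
  have a0: "a > 0" using s by (simp add: a_def d_def)
  obtain Cu Ct where UT': "eventually (\<lambda>\<epsilon>.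
        (\<exists>T. t0 \<le> T \<and> U T \<le> Cu * \<epsilon> powr (1 / real m) \<and> T \<le> Ct * \<epsilon> powr (1 / real m - 1 - a))) (at_right 0)"
    using UT[OF a0] by blast
  obtain Lg where Lg: "Lg > 0" "\<And>\<epsilon> T. 0 < \<epsilon> \<Longrightarrow> t0 \<le> T \<Longrightarrow> U T + \<epsilon> < \<rho>0 \<Longrightarrow>
     measure lborel (eps_nbhd S \<epsilon>) \<le> 4*pi*\<rho>0*(U T + \<epsilon>) + 4*pi*\<epsilon>^2 * ((T - t1) * Lg / \<epsilon> + 2)"
    using area_upper by blast
  define q where "q = 1 / real m - 1 - a"
  define g where "g \<epsilon> = (4*pi*\<rho>0*Cu) * \<epsilon> powr (s - d) + (4*pi*\<rho>0) * \<epsilon> powr (s - 1)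
      + (4*pi*Lg*Ct) * \<epsilon> powr a + (4*pi*Lg*\<bar>t1\<bar>) * \<epsilon> powr (s - 1) + (8*pi) * \<epsilon> powr s" for \<epsilon>
  have s1: "s - 1 > 0" "s - d > 0" "s > 0" using s d1 by (auto simp: d_def)
  have gl: "(g \<longlongrightarrow> 0) (at_right 0)"
  proof -
    have "((\<lambda>\<epsilon>. (4*pi*\<rho>0*Cu) * \<epsilon> powr (s - d) + (4*pi*\<rho>0) * \<epsilon> powr (s - 1)
      + (4*pi*Lg*Ct) * \<epsilon> powr a + (4*pi*Lg*\<bar>t1\<bar>) * \<epsilon> powr (s - 1) + (8*pi) * \<epsilon> powr s) \<longlongrightarrow>
       0 + 0 + 0 + 0 + 0) (at_right 0)"
      by (intro tendsto_add powr_to_0C s1 a0)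
    then show ?thesis by (simp add: g_def[abs_def])
  qed
  have ev1: "eventually (\<lambda>\<epsilon>. Cu * \<epsilon> powr (1 / real m) + \<epsilon> < \<rho>0) (at_right 0)"
  proof -
    have "((\<lambda>\<epsilon>. Cu * \<epsilon> powr (1 / real m) + \<epsilon>) \<longlongrightarrow> 0 + 0) (at_right 0)"
      using m by (intro tendsto_add powr_to_0C tendsto_ident_at) auto
    then show ?thesis using r0 by (intro order_tendstoD(2)) auto
  qed
  have ev2: "eventually (\<lambda>\<epsilon>::real. \<epsilon> \<in> {0<..<1}) (at_right 0)"
    using eventually_at_right_real[of 0 1] by simp
  have upper: "eventually (\<lambda>\<epsilon>. measure lborel (eps_nbhd S \<epsilon>) / \<epsilon> powr (2 - s) \<le> g \<epsilon>) (at_right 0)"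
    using ev1 ev2 UT'
  proof eventually_elim
    case (elim \<epsilon>)
    then have e: "0 < \<epsilon>" by auto
    obtain T where T: "t0 \<le> T" "U T \<le> Cu * \<epsilon> powr (1 / real m)" "T \<le> Ct * \<epsilon> powr q"
      using elim(3) by (auto simp: q_def)
    have w: "U T + \<epsilon> < \<rho>0" using T(2) elim(1) by linarith
    have A: "measure lborel (eps_nbhd S \<epsilon>) \<le> 4*pi*\<rho>0*(U T + \<epsilon>) + 4*pi*\<epsilon>^2 * ((T - t1) * Lg / \<epsilon> + 2)"
      by (rule Lg(2)[OF e T(1) w])
    have B1: "4*pi*\<epsilon>^2 * ((T - t1) * Lg / \<epsilon> + 2) = (4*pi*Lg)*\<epsilon>*(T - t1) + (8*pi)*\<epsilon>^2"
      using e by (simp add: field_simps power2_eq_square)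
    have B2: "(4*pi*Lg)*\<epsilon>*(T - t1) \<le> (4*pi*Lg)*\<epsilon>*(Ct * \<epsilon> powr q + \<bar>t1\<bar>)"
      by (rule mult_left_mono) (use T(3) e Lg(1) in auto)
    have B3: "4*pi*\<rho>0*(U T + \<epsilon>) \<le> (4*pi*\<rho>0*Cu) * \<epsilon> powr (1 / real m) + (4*pi*\<rho>0) * \<epsilon>"
    proof -
      have "4*pi*\<rho>0*(U T) \<le> 4*pi*\<rho>0*(Cu * \<epsilon> powr (1 / real m))"
        by (rule mult_left_mono) (use T(2) r0 in auto)
      then show ?thesis by (simp add: algebra_simps)
    qed
    define RHS where "RHS = (4*pi*\<rho>0*Cu) * \<epsilon> powr (1 / real m) + (4*pi*\<rho>0) * \<epsilon>
        + (4*pi*Lg)*\<epsilon>*(Ct * \<epsilon> powr q + \<bar>t1\<bar>) + (8*pi)*\<epsilon>^2"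
    have AR: "measure lborel (eps_nbhd S \<epsilon>) \<le> RHS" using A B1 B2 B3 unfolding RHS_def by linarith
    have X: "\<epsilon> powr (2 - s) > 0" using e by simp
    have "measure lborel (eps_nbhd S \<epsilon>) / \<epsilon> powr (2 - s) \<le> RHS / \<epsilon> powr (2 - s)"
      by (rule divide_right_mono[OF AR]) (use X in simp)
    also have "RHS / \<epsilon> powr (2 - s) = RHS * \<epsilon> powr (s - 2)"
    proof -
      have "\<epsilon> powr (- (2 - s)) = inverse (\<epsilon> powr (2 - s))" by (rule powr_minus)
      then have "\<epsilon> powr (s - 2) = inverse (\<epsilon> powr (2 - s))" by simp
      then show ?thesis by (simp add: divide_inverse)
    qed
    also have "RHS * \<epsilon> powr (s - 2) = g \<epsilon>"
    proof -
      have f1: "\<epsilon> powr (1 / real m) * \<epsilon> powr (s - 2) = \<epsilon> powr (s - d)"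
        using e by (simp add: powr_add[symmetric] d_def algebra_simps)
      have f2: "\<epsilon> * \<epsilon> powr (s - 2) = \<epsilon> powr (s - 1)"
      proof -
        have e1: "\<epsilon> powr 1 = \<epsilon>" using e by simp
        have "\<epsilon> powr 1 * \<epsilon> powr (s - 2) = \<epsilon> powr (1 + (s - 2))" by (simp only: powr_add)
        also have "1 + (s - 2) = s - 1" by simp
        finally show ?thesis unfolding e1 .
      qed
      have f3: "\<epsilon> * \<epsilon> powr q * \<epsilon> powr (s - 2) = \<epsilon> powr a"
      proof -
        have e1: "\<epsilon> powr 1 = \<epsilon>" using e by simp
        have "\<epsilon> * \<epsilon> powr q * \<epsilon> powr (s - 2) = \<epsilon> powr 1 * \<epsilon> powr q * \<epsilon> powr (s - 2)" by (simp only: e1)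
        also have "\<dots> = \<epsilon> powr (1 + q + (s - 2))" by (simp only: powr_add)
        also have "1 + q + (s - 2) = a" by (simp add: q_def a_def d_def field_simps)
        finally show ?thesis .
      qed
      have f4: "\<epsilon>^2 * \<epsilon> powr (s - 2) = \<epsilon> powr s"
      proof -
        have e2: "\<epsilon> powr 2 = \<epsilon>^2" using powr_realpow[of \<epsilon> 2] e by simp
        have "\<epsilon>^2 * \<epsilon> powr (s - 2) = \<epsilon> powr 2 * \<epsilon> powr (s - 2)" by (simp only: e2)
        also have "\<dots> = \<epsilon> powr (2 + (s - 2))" by (simp only: powr_add)
        also have "2 + (s - 2) = s" by simp
        finally show ?thesis .
      qed
      have "RHS * \<epsilon> powr (s - 2) = (4*pi*\<rho>0*Cu) * (\<epsilon> powr (1 / real m) * \<epsilon> powr (s - 2))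
          + (4*pi*\<rho>0) * (\<epsilon> * \<epsilon> powr (s - 2)) + (4*pi*Lg)*Ct * (\<epsilon> * \<epsilon> powr q * \<epsilon> powr (s - 2))
          + (4*pi*Lg)*\<bar>t1\<bar> * (\<epsilon> * \<epsilon> powr (s - 2)) + (8*pi) * (\<epsilon>^2 * \<epsilon> powr (s - 2))"
        unfolding RHS_def by (rule alg2)
      also have "\<dots> = g \<epsilon>" unfolding f1 f2 f3 f4 g_def by (simp add: mult_ac)
      finally show ?thesis .
    qed
    finally show ?case .
  qed
  have lower: "eventually (\<lambda>\<epsilon>. 0 \<le> measure lborel (eps_nbhd S \<epsilon>) / \<epsilon> powr (2 - s)) (at_right 0)"
    by (rule always_eventually) simp
  show ?thesis by (rule tendsto_sandwich[OF lower upper tendsto_const gl])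
qed

end


lemma powr_neg_at_top:
  assumes r: "r < 0"
  shows "filterlim (\<lambda>x::real. x powr r) at_top (at_right 0)"
proof -
  have "filterlim (\<lambda>x::real. x powr (- r)) (at_right 0) (at_right 0)"
  proof (rule tendsto_imp_filterlim_at_right)
    show "((\<lambda>x::real. x powr (- r)) \<longlongrightarrow> 0) (at_right 0)" using powr_to_0[of "- r"] r by simp
    show "\<forall>\<^sub>F x in at_right 0. 0 < (x::real) powr (- r)"
      by (rule eventually_mono[OF eventually_at_right_less]) simp
  qed
  from filterlim_compose[OF filterlim_inverse_at_top_right this]
  have "filterlim (\<lambda>x::real. inverse (x powr (- r))) at_top (at_right 0)" .
  moreover have "(\<lambda>x::real. inverse (x powr (- r))) = (\<lambda>x. x powr r)"
    by (rule ext) (simp add: powr_minus[symmetric])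
  ultimately show ?thesis by simp
qed

context spir4 begin

lemma UT_power:
  assumes m1: "m > 1" and a: "a > 0"
  shows "\<exists>Cu Ct. eventually (\<lambda>\<epsilon>.
        (\<exists>T. t0 \<le> T \<and> U T \<le> Cu * \<epsilon> powr (1 / real m) \<and> T \<le> Ct * \<epsilon> powr (1 / real m - 1 - a))) (at_right 0)"
proof -
  obtain k1 k2 where k: "k1 > 0" "k2 > 0"
    "eventually (\<lambda>\<phi>. k1 * \<bar>\<phi>\<bar> powr (- 1 / (real m - 1)) \<le> \<bar>G \<phi> - \<rho>0\<bar> \<and> \<bar>G \<phi> - \<rho>0\<bar> \<le> k2 * \<bar>\<phi>\<bar> powr (- 1 / (real m - 1))) at_top"
    using compar_power[OF m1] unfolding comparable_def by blast
  then obtain Tc where Tc: "\<And>t. t \<ge> Tc \<Longrightarrow> \<bar>G t - \<rho>0\<bar> \<le> k2 * \<bar>t\<bar> powr (- 1 / (real m - 1))"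
    unfolding eventually_at_top_linorder by blast
  define K where "K = max (max Tc t0) 1"
  define r where "r = 1 / real m - 1"
  have r0: "r < 0" using m1 by (simp add: r_def)
  have ev1: "eventually (\<lambda>\<epsilon>. \<epsilon> powr r \<ge> K) (at_right 0)"
    using powr_neg_at_top[OF r0] unfolding filterlim_at_top by blast
  have ev2: "eventually (\<lambda>\<epsilon>::real. \<epsilon> \<in> {0<..<1}) (at_right 0)"
    using eventually_at_right_real[of 0 1] by simp
  show ?thesis
  proof (rule exI[of _ k2], rule exI[of _ 1])
    show "eventually (\<lambda>\<epsilon>.
        (\<exists>T. t0 \<le> T \<and> U T \<le> k2 * \<epsilon> powr (1 / real m) \<and> T \<le> 1 * \<epsilon> powr (1 / real m - 1 - a))) (at_right 0)"
      using ev1 ev2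
    proof eventually_elim
      case (elim \<epsilon>)
      define T where "T = \<epsilon> powr r"
      have T: "T \<ge> Tc" "T \<ge> t0" "T \<ge> 1" using elim by (auto simp: T_def K_def)
      have "U T = \<bar>G T - \<rho>0\<bar>" using U_abs[of T] T t0 by simp
      also have "\<dots> \<le> k2 * \<bar>T\<bar> powr (- 1 / (real m - 1))" using Tc[OF T(1)] .
      also have "\<bar>T\<bar> powr (- 1 / (real m - 1)) = \<epsilon> powr (r * (- 1 / (real m - 1)))"
        using T by (simp add: T_def powr_powr)
      also have "r * (- 1 / (real m - 1)) = 1 / real m" using m1 by (simp add: r_def field_simps)
      finally have 1: "U T \<le> k2 * \<epsilon> powr (1 / real m)" .
      have "T \<le> \<epsilon> powr (r - a)" unfolding T_def
        by (rule powr_mono') (use a elim in auto)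
      then have 2: "T \<le> 1 * \<epsilon> powr (1 / real m - 1 - a)" by (simp add: r_def)
      show ?case using 1 2 T by blast
    qed
  qed
qed

lemma box_dim_power:
  assumes m1: "m > 1"
  shows "has_box_dim S (2 - 1 / real m)"
  by (rule has_box_dim_generic) (auto intro: box_lo box_hi UT_power[OF m1])

end

locale spir5 = spir3 + spir4
begin

lemma UT_exp:
  assumes a: "a > 0"
  shows "\<exists>Cu Ct. eventually (\<lambda>\<epsilon>.
        (\<exists>T. t0 \<le> T \<and> U T \<le> Cu * \<epsilon> powr (1 / real m) \<and> T \<le> Ct * \<epsilon> powr (1 / real m - 1 - a))) (at_right 0)"
proof -
  have ev2: "eventually (\<lambda>\<epsilon>::real. \<epsilon> \<in> {0<..<1}) (at_right 0)"
    using eventually_at_right_real[of 0 1] by simp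
  define Ct where "Ct = \<bar>t0\<bar> + 2 / (c1 * a)"
  show ?thesis
  proof (rule exI[of _ "U t0"], rule exI[of _ Ct])
    show "eventually (\<lambda>\<epsilon>.
        (\<exists>T. t0 \<le> T \<and> U T \<le> U t0 * \<epsilon> powr (1 / real m) \<and> T \<le> Ct * \<epsilon> powr (1 / real m - 1 - a))) (at_right 0)"
      using ev2
    proof eventually_elim
      case (elim \<epsilon>)
      then have e: "0 < \<epsilon>" "\<epsilon> < 1" by auto
      define L where "L = ln (1 / \<epsilon>)"
      have L0: "L > 0" using e by (simp add: L_def)
      have Le: "L = - ln \<epsilon>" using e by (simp add: L_def ln_div)
      define T where "T = t0 + (2 / c1) * L"
      have T0: "T \<ge> t0" using L0 c1 by (simp add: T_def)
      have "U T \<le> U t0 * exp (- c1 * (T - t0))" by (rule decay[OF T0])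
      also have "- c1 * (T - t0) = ln \<epsilon> + ln \<epsilon>" using c1 by (simp add: T_def Le)
      also have "exp (ln \<epsilon> + ln \<epsilon>) = \<epsilon> * \<epsilon>" by (simp only: exp_add exp_ln[OF e(1)])
      also have "U t0 * (\<epsilon> * \<epsilon>) \<le> U t0 * \<epsilon>"
        using e Upos0[of t0] by (intro mult_left_mono) (auto simp: mult_left_le)
      finally have 1: "U T \<le> U t0 * \<epsilon> powr (1 / real m)" using e m_one by simp
      have pa: "\<epsilon> powr (- a) \<ge> 1"
      proof -
        have "\<epsilon> powr a \<le> 1" using e a by (intro powr_le1) auto
        moreover have "\<epsilon> powr a > 0" using e by simp
        ultimately show ?thesis by (simp add: powr_minus one_le_inverse_iff)
      qed
      have "a * L = ln (\<epsilon> powr (- a))" using e by (simp add: Le)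
      also have "\<dots> \<le> \<epsilon> powr (- a) - 1" by (rule ln_le_minus_one) (use e in simp)
      finally have aL: "L \<le> \<epsilon> powr (- a) / a" using a by (simp add: field_simps)
      have "T \<le> t0 + (2 / c1) * (\<epsilon> powr (- a) / a)"
        unfolding T_def using aL c1 by (intro add_left_mono mult_left_mono) auto
      also have "\<dots> \<le> \<bar>t0\<bar> * \<epsilon> powr (- a) + (2 / (c1 * a)) * \<epsilon> powr (- a)"
      proof -
        have "t0 \<le> \<bar>t0\<bar> * 1" by simp
        also have "\<dots> \<le> \<bar>t0\<bar> * \<epsilon> powr (- a)" using pa by (intro mult_left_mono) auto
        finally show ?thesis by (simp add: field_simps)
      qed
      also have "\<dots> = Ct * \<epsilon> powr (1 / real m - 1 - a)" using m_one by (simp add: Ct_def algebra_simps)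
      finally have 2: "T \<le> Ct * \<epsilon> powr (1 / real m - 1 - a)" .
      show ?case using 1 2 T0 by blast
    qed
  qed
qed

lemma box_dim_exp: "has_box_dim S (2 - 1 / real m)"
  by (rule has_box_dim_generic) (auto intro: box_lo box_hi UT_exp)

end


lemma core:
  fixes f :: "real \<Rightarrow> real" and G :: "real \<Rightarrow> real"
  assumes r0: "\<rho>0 > 0" and sig: "\<sigma> = 1 \<or> \<sigma> = -1" and m: "m \<ge> 1"
  and fcont: "\<And>x. x > 0 \<Longrightarrow> isCont f x"
  and dl: "\<delta> > 0" and kl: "kl > 0" and sD: "sD = 1 \<or> sD = -1"
  and fac: "\<And>x. \<bar>x - \<rho>0\<bar> \<le> \<delta> \<Longrightarrow> \<exists>\<kappa>. f x = \<kappa> * (x - \<rho>0)^m \<and> kl \<le> sD * \<kappa> \<and> sD * \<kappa> \<le> ku"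
  and so: "\<And>x. \<bar>x - \<rho>0\<bar> \<le> \<delta> \<Longrightarrow> \<bar>f x - Dd * (x - \<rho>0)\<bar> \<le> M * (x - \<rho>0)^2"
  and Gpos: "\<And>t. t \<ge> t1 \<Longrightarrow> G t > 0" and Gne: "\<And>t. t \<ge> t1 \<Longrightarrow> G t \<noteq> \<rho>0"
  and Gder: "\<And>t. t \<ge> t1 \<Longrightarrow> (G has_real_derivative (\<sigma> * (- G t * f (G t)))) (at t within {t1..})"
  and Glim: "(G \<longlongrightarrow> \<rho>0) at_top"
  shows "(m = 1 \<longrightarrow> comparable G \<rho>0 (\<lambda>t. exp (- (\<sigma> * (\<rho>0 * Dd)) * t)) at_top)
    \<and> (m > 1 \<longrightarrow> comparable G \<rho>0 (\<lambda>\<phi>. \<bar>\<phi>\<bar> powr (- 1 / (real m - 1))) at_top)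
    \<and> has_box_dim ((\<lambda>t. (G t * cos t, \<sigma> * (G t * sin t))) ` {t1..}) (2 - 1 / real m)"
proof -
  interpret spir f \<rho>0 t1 \<sigma> G m \<delta> kl ku sD
    by unfold_locales (use assms in auto)
  obtain t0 c1 c2 where k: "t0 \<ge> t1" "0 < c1" "0 < c2" "\<forall>t\<ge>t0. U t \<le> \<delta> \<and> U t \<le> \<rho>0/2 \<and> U t \<le> 1 \<and>
      - c2 * U t ^ m \<le> Ud t \<and> Ud t \<le> - c1 * U t ^ m"
    using key by blast
  interpret spir4 f \<rho>0 t1 \<sigma> G m \<delta> kl ku sD t0 c1 c2
    by unfold_locales (use k fcont in auto)
  have Seq: "(\<lambda>t. (G t * cos t, \<sigma> * (G t * sin t))) ` {t1..} = S"
    by (simp add: S_def \<gamma>_def[abs_def])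
  show ?thesis
  proof (cases "m = 1")
    case True
    interpret spir5 f \<rho>0 t1 \<sigma> G m \<delta> kl ku sD t0 c1 c2 M Dd
      by unfold_locales (use True so in auto)
    show ?thesis using compar_exp box_dim_exp True Seq by simp
  next
    case False
    then have m1: "m > 1" using m by simp
    show ?thesis using compar_power[OF m1] box_dim_power[OF m1] False Seq by simp
  qed
qed



lemma comparable_mirror:
  assumes "comparable (\<lambda>t. F (- t)) \<rho>0 (\<lambda>t. H (- t)) at_top"
  shows "comparable F \<rho>0 H at_bot"
proof -
  obtain c1 c2 where c: "c1 > 0" "c2 > 0"
    "eventually (\<lambda>t. c1 * H (- t) \<le> \<bar>F (- t) - \<rho>0\<bar> \<and> \<bar>F (- t) - \<rho>0\<bar> \<le> c2 * H (- t)) at_top"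
    using assms unfolding comparable_def by blast
  then obtain N where N: "\<And>t. t \<ge> N \<Longrightarrow> c1 * H (- t) \<le> \<bar>F (- t) - \<rho>0\<bar> \<and> \<bar>F (- t) - \<rho>0\<bar> \<le> c2 * H (- t)"
    unfolding eventually_at_top_linorder by blast
  have "eventually (\<lambda>\<phi>. c1 * H \<phi> \<le> \<bar>F \<phi> - \<rho>0\<bar> \<and> \<bar>F \<phi> - \<rho>0\<bar> \<le> c2 * H \<phi>) at_bot"
    unfolding eventually_at_bot_linorder
  proof (intro exI[of _ "- N"] allI impI)
    fix \<phi> :: real assume "\<phi> \<le> - N"
    then show "c1 * H \<phi> \<le> \<bar>F \<phi> - \<rho>0\<bar> \<and> \<bar>F \<phi> - \<rho>0\<bar> \<le> c2 * H \<phi>" using N[of "- \<phi>"] by simp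
  qed
  then show ?thesis unfolding comparable_def using c by blast
qed

theorem theorem4p2:
  fixes l m :: nat and a :: "nat \<Rightarrow> real" and \<rho>0 :: real
  assumes "l \<ge> 1" and "\<rho>0 > 0"
    and "zero_multiplicity (cyc_fun l a) \<rho>0 m"
    and "1 \<le> m" and "m \<le> l"
  shows "(m = 1 \<longrightarrow> (\<exists>\<beta>. \<beta> \<noteq> 0 \<and> (\<forall>F T L. traj_tail l a \<rho>0 F T L \<longrightarrow>
              comparable F \<rho>0 (\<lambda>\<phi>. exp (- \<beta> * \<phi>)) L)))
       \<and> (m > 1 \<longrightarrow> (\<forall>F T L. traj_tail l a \<rho>0 F T L \<longrightarrow>
              comparable F \<rho>0 (\<lambda>\<phi>. \<bar>\<phi>\<bar> powr (- 1 / (real m - 1))) L))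
       \<and> (\<forall>F T L. traj_tail l a \<rho>0 F T L \<longrightarrow>
              has_box_dim (spiral_set F T) (2 - 1 / real m))"
proof -
  define f where "f = cyc_fun l a"
  have r0: "\<rho>0 > 0" by (rule assms(2))
  have m0: "m > 0" using assms(4) by simp
  have d: "\<And>k t. t > 0 \<Longrightarrow> ((deriv ^^ k) f has_real_derivative (deriv ^^ Suc k) f t) (at t)"
    unfolding f_def by (rule cyc_fun_higher_deriv)
  have fcont: "\<And>x. x > 0 \<Longrightarrow> isCont f x"
    using cyc_fun_higher_cont[of _ 0 l a] by (simp add: f_def)
  have z: "\<forall>k<m. (deriv ^^ k) f \<rho>0 = 0" and Dnz: "(deriv ^^ m) f \<rho>0 \<noteq> 0"
    using assms(3) by (auto simp: zero_multiplicity_def f_def)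
  define D where "D = (deriv ^^ m) f \<rho>0"
  obtain \<delta>1 where \<delta>1: "\<delta>1 > 0" "\<delta>1 < \<rho>0" "\<And>x. \<bar>x - \<rho>0\<bar> \<le> \<delta>1 \<Longrightarrow>
      (\<exists>\<kappa>. f x = \<kappa> * (x - \<rho>0) ^ m \<and> \<bar>\<kappa> - D / fact m\<bar> \<le> \<bar>D\<bar> / (2 * fact m))"
    using mult_factor[OF d r0 z m0 D_def[symmetric] Dnz[folded D_def]] by blast
  have f0: "f \<rho>0 = 0" using z m0 by auto
  obtain \<delta>2 M where \<delta>2: "\<delta>2 > 0" "\<delta>2 < \<rho>0" "\<And>x. \<bar>x - \<rho>0\<bar> \<le> \<delta>2 \<Longrightarrow>
      \<bar>f x - deriv f \<rho>0 * (x - \<rho>0)\<bar> \<le> M * (x - \<rho>0)^2"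
    using second_order[OF d r0 f0] by blast
  define \<delta> where "\<delta> = min \<delta>1 \<delta>2"
  define kl where "kl = \<bar>D\<bar> / (2 * fact m)"
  define ku where "ku = 3 * \<bar>D\<bar> / (2 * fact m)"
  define sD :: real where "sD = (if D > 0 then 1 else -1)"
  define Dd where "Dd = deriv f \<rho>0"
  have Dnz': "D \<noteq> 0" using Dnz by (simp add: D_def)
  have dl: "\<delta> > 0" using \<delta>1 \<delta>2 by (simp add: \<delta>_def)
  have kl: "kl > 0" using Dnz' by (simp add: kl_def)
  have sD: "sD = 1 \<or> sD = -1" by (simp add: sD_def)
  have sDD: "sD * D = \<bar>D\<bar>" by (simp add: sD_def)
  have fac: "\<exists>\<kappa>. f x = \<kappa> * (x - \<rho>0)^m \<and> kl \<le> sD * \<kappa> \<and> sD * \<kappa> \<le> ku" if x: "\<bar>x - \<rho>0\<bar> \<le> \<delta>" for x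
  proof -
    obtain \<kappa> where k: "f x = \<kappa> * (x - \<rho>0) ^ m" "\<bar>\<kappa> - D / fact m\<bar> \<le> \<bar>D\<bar> / (2 * fact m)"
      using \<delta>1(3)[of x] x by (auto simp: \<delta>_def)
    have e1: "sD * \<kappa> = sD * (\<kappa> - D / fact m) + \<bar>D\<bar> / fact m"
      using sDD by (simp add: algebra_simps flip: sDD)
    have e2: "\<bar>sD * (\<kappa> - D / fact m)\<bar> = \<bar>\<kappa> - D / fact m\<bar>" using sD by auto
    have hX: "\<bar>sD * (\<kappa> - D / fact m)\<bar> \<le> \<bar>D\<bar> / (2 * fact m)" using e2 k(2) by simp
    then have hX2: "sD * (\<kappa> - D / fact m) \<le> \<bar>D\<bar> / (2 * fact m)" "- (sD * (\<kappa> - D / fact m)) \<le> \<bar>D\<bar> / (2 * fact m)"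
      by (simp_all add: abs_le_iff)
    have h2: "\<bar>D\<bar> / fact m = 2 * (\<bar>D\<bar> / (2 * fact m))" by simp
    have h3: "ku = 3 * (\<bar>D\<bar> / (2 * fact m))" by (simp add: ku_def)
    have "kl \<le> sD * \<kappa> \<and> sD * \<kappa> \<le> ku"
      using e1 hX2 h2 h3 unfolding kl_def by linarith
    then show ?thesis using k(1) by blast
  qed
  have so: "\<bar>f x - Dd * (x - \<rho>0)\<bar> \<le> M * (x - \<rho>0)^2" if x: "\<bar>x - \<rho>0\<bar> \<le> \<delta>" for x
    using \<delta>2(3)[of x] x by (auto simp: \<delta>_def Dd_def)
  have main: "(m = 1 \<longrightarrow> comparable F \<rho>0 (\<lambda>\<phi>. exp (- (\<rho>0 * Dd) * \<phi>)) L)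
      \<and> (m > 1 \<longrightarrow> comparable F \<rho>0 (\<lambda>\<phi>. \<bar>\<phi>\<bar> powr (- 1 / (real m - 1))) L)
      \<and> has_box_dim (spiral_set F T) (2 - 1 / real m)"
    if tr: "traj_tail l a \<rho>0 F T L" for F T L
  proof -
    obtain \<phi>1 where case1: "(T = {\<phi>1..} \<and> L = at_top) \<or> (T = {..\<phi>1} \<and> L = at_bot)"
      and Fp: "\<And>\<phi>. \<phi> \<in> T \<Longrightarrow> F \<phi> > 0 \<and> F \<phi> \<noteq> \<rho>0 \<and>
        (F has_real_derivative (- F \<phi> * f (F \<phi>))) (at \<phi> within T)"
      and Fl: "(F \<longlongrightarrow> \<rho>0) L"
      using tr unfolding traj_tail_def f_def by blast
    from case1 show ?thesis
    proof
      assume c: "T = {\<phi>1..} \<and> L = at_top"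
      have C: "(m = 1 \<longrightarrow> comparable F \<rho>0 (\<lambda>t. exp (- (1 * (\<rho>0 * Dd)) * t)) at_top)
        \<and> (m > 1 \<longrightarrow> comparable F \<rho>0 (\<lambda>\<phi>. \<bar>\<phi>\<bar> powr (- 1 / (real m - 1))) at_top)
        \<and> has_box_dim ((\<lambda>t. (F t * cos t, 1 * (F t * sin t))) ` {\<phi>1..}) (2 - 1 / real m)"
      proof (rule core[where f=f and \<delta>=\<delta> and kl=kl and ku=ku and sD=sD and M=M])
        fix t assume t: "t \<ge> \<phi>1"
        show "F t > 0" "F t \<noteq> \<rho>0" using Fp[of t] t c by auto
        show "(F has_real_derivative 1 * (- F t * f (F t))) (at t within {\<phi>1..})" using Fp[of t] t c by auto
      next
        show "(F \<longlongrightarrow> \<rho>0) at_top" using Fl c by simp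
      qed (use r0 assms(4) fcont dl kl sD fac so in auto)
      have S: "(\<lambda>t. (F t * cos t, 1 * (F t * sin t))) ` {\<phi>1..} = spiral_set F T"
        using c by (simp add: spiral_set_def)
      show ?thesis using C S c by simp
    next
      assume c: "T = {..\<phi>1} \<and> L = at_bot"
      define G where "G t = F (- t)" for t
      have C: "(m = 1 \<longrightarrow> comparable G \<rho>0 (\<lambda>t. exp (- ((-1) * (\<rho>0 * Dd)) * t)) at_top)
        \<and> (m > 1 \<longrightarrow> comparable G \<rho>0 (\<lambda>\<phi>. \<bar>\<phi>\<bar> powr (- 1 / (real m - 1))) at_top)
        \<and> has_box_dim ((\<lambda>t. (G t * cos t, (-1) * (G t * sin t))) ` {- \<phi>1..}) (2 - 1 / real m)"
      proof (rule core[where f=f and \<delta>=\<delta> and kl=kl and ku=ku and sD=sD and M=M])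
        fix t assume t: "t \<ge> - \<phi>1"
        then have tt: "- t \<in> T" using c by auto
        show "G t > 0" "G t \<noteq> \<rho>0" using Fp[OF tt] by (auto simp: G_def)
        have d1: "(F has_real_derivative (- F (- t) * f (F (- t)))) (at (uminus t) within (uminus ` {- \<phi>1..}))"
          using Fp[OF tt] c by simp
        have d2: "(uminus has_real_derivative (-1)) (at t within {- \<phi>1..})"
          using DERIV_minus[OF DERIV_ident[of "at t within {- \<phi>1..}"]] by simp
        have "(F \<circ> uminus has_real_derivative (- F (- t) * f (F (- t))) * (-1)) (at t within {- \<phi>1..})"
          by (rule DERIV_image_chain[OF d1 d2])
        then show "(G has_real_derivative (-1) * (- G t * f (G t))) (at t within {- \<phi>1..})"
          by (simp add: G_def[abs_def] o_def)
      next
        show "(G \<longlongrightarrow> \<rho>0) at_top"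
          unfolding G_def using filterlim_compose[OF Fl[unfolded c[THEN conjunct2]] filterlim_uminus_at_bot_at_top]
          by simp
      qed (use r0 assms(4) fcont dl kl sD fac so in auto)
      have S: "(\<lambda>t. (G t * cos t, (-1) * (G t * sin t))) ` {- \<phi>1..} = spiral_set F T"
      proof -
        have "(\<lambda>t. (G t * cos t, (-1) * (G t * sin t))) ` {- \<phi>1..}
            = (\<lambda>t. (G t * cos t, (-1) * (G t * sin t))) ` (uminus ` {..\<phi>1})" by simp
        also have "\<dots> = (\<lambda>\<phi>. (F \<phi> * cos \<phi>, F \<phi> * sin \<phi>)) ` {..\<phi>1}"
          unfolding image_image by (simp add: G_def)
        finally show ?thesis using c by (simp add: spiral_set_def)
      qed
      have e1: "(\<lambda>t. exp (- ((-1) * (\<rho>0 * Dd)) * t)) = (\<lambda>t. exp (- (\<rho>0 * Dd) * (- t)))"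
        by (rule ext) simp
      have e2: "(\<lambda>\<phi>::real. \<bar>\<phi>\<bar> powr (- 1 / (real m - 1))) = (\<lambda>t. \<bar>- t\<bar> powr (- 1 / (real m - 1)))"
        by (rule ext) simp
      have "m = 1 \<longrightarrow> comparable F \<rho>0 (\<lambda>\<phi>. exp (- (\<rho>0 * Dd) * \<phi>)) at_bot"
        using C comparable_mirror[of F \<rho>0 "\<lambda>\<phi>. exp (- (\<rho>0 * Dd) * \<phi>)"] unfolding e1 G_def by simp
      moreover have "m > 1 \<longrightarrow> comparable F \<rho>0 (\<lambda>\<phi>. \<bar>\<phi>\<bar> powr (- 1 / (real m - 1))) at_bot"
        using C comparable_mirror[of F \<rho>0 "\<lambda>\<phi>. \<bar>\<phi>\<bar> powr (- 1 / (real m - 1))"] unfolding G_def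
        by (simp only: e2[symmetric]) blast
      ultimately show ?thesis using C S c by simp
    qed
  qed
  have "m = 1 \<longrightarrow> \<rho>0 * Dd \<noteq> 0" using Dnz' r0 by (auto simp: D_def Dd_def)
  then show ?thesis using main by blast
qed


end
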